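(* Let $r\ge 1$, $n\ge r+1$, and let $K$ be a pure $r$-dimensional simplicial complex on $n$ vertices with $\beta_i(K)=0$ for all $i\in\{1,\dots,r\}$. Then $$\mathfrak{q}_{r-1}(K)\le rn-r^2+1,$$ with equality if and only if $K\cong{\sf T}_n^r$.
   Context: A (finite abstract) simplicial complex $K$ on a finite vertex set $V(K)$ is a family of subsets of $V(K)$ closed under taking subsets and containing every singleton; it is on $n$ vertices if $|V(K)|=n$. An $i$-face is a member of cardinality $i+1$; $S_i(K)$ is the set of $i$-faces; facets are inclusion-maximal faces; $K$ is pure if all facets have the same dimension. $\beta_i(K)=\dim_{\mathbb R}H_i(K;\mathbb R)$ is the $i$-th Betti number (real simplicial homology). For an $i$-face $F$, $d_K(F)$ is the number of $(i+1)$-faces containing $F$; two distinct $i$-faces are up-neighbors if their union is an $(i+1)$-face. The signless up Laplacian $Q_i^{\mathrm{up}}(K)$ is the operator on $\mathbb{R}^{S_i(K)}$ given by $(Q_i^{\mathrm{up}}(K)f)(F)=d_K(F)f(F)+\sum_{F'\text{ up-neighbor of }F}f(F')$, and $\mathfrak{q}_i(K)$ is its largest eigenvalue. The tented complex ${\sf T}_n^r$ is the pure $r$-dimensional complex on $[n]$ whose facets are the sets $\{n\}\cup F$ with $F$ an $r$-subset of $[n-1]$. *)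

theory Defs
  imports "HOL-Analysis.Analysis" "HOL-Library.Function_Algebras"
begin

definition simplicial_complex :: "'a set \<Rightarrow> 'a set set \<Rightarrow> bool" where
  "simplicial_complex V K \<longleftrightarrow> finite V \<and> (\<forall>F\<in>K. F \<subseteq> V)
     \<and> (\<forall>F\<in>K. \<forall>G. G \<subseteq> F \<longrightarrow> G \<in> K) \<and> (\<forall>v\<in>V. {v} \<in> K)"

definition faces :: "'a set set \<Rightarrow> nat \<Rightarrow> 'a set set" where
  "faces K i = {F \<in> K. card F = i + 1}"

definition facets :: "'a set set \<Rightarrow> 'a set set" where
  "facets K = {F \<in> K. \<forall>G\<in>K. F \<subseteq> G \<longrightarrow> G = F}"

definition pure_dim :: "'a set set \<Rightarrow> nat \<Rightarrow> bool" where
  "pure_dim K r \<longleftrightarrow> K \<noteq> {} \<and> (\<forall>F\<in>facets K. card F = r + 1)"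

definition chains :: "'a set set \<Rightarrow> nat \<Rightarrow> ('a set \<Rightarrow> real) set" where
  "chains K i = {f. \<forall>F. F \<notin> faces K i \<longrightarrow> f F = 0}"

text \<open>Orientation sign of the facet G = F - {v} of F, w.r.t. the vertex order:
(-1)^(number of vertices of F smaller than v).\<close>
definition incidence_sign :: "'a::linorder set \<Rightarrow> 'a set \<Rightarrow> real" where
  "incidence_sign F G = (-1) ^ card {w \<in> F. w < (THE v. v \<in> F - G)}"

text \<open>Boundary map from i-chains to (i-1)-chains, i >= 1.\<close>
definition boundary :: "'a::linorder set set \<Rightarrow> nat \<Rightarrow> ('a set \<Rightarrow> real) \<Rightarrow> ('a set \<Rightarrow> real)" where
  "boundary K i f = (\<lambda>G. if G \<in> faces K (i - 1)
      then (\<Sum>F\<in>{F \<in> faces K i. G \<subseteq> F}. incidence_sign F G * f F) else 0)"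

definition fscale :: "real \<Rightarrow> ('a set \<Rightarrow> real) \<Rightarrow> ('a set \<Rightarrow> real)" where
  "fscale c f = (\<lambda>x. c * f x)"

definition betti :: "'a::linorder set set \<Rightarrow> nat \<Rightarrow> nat" where
  "betti K i = vector_space.dim fscale {f \<in> chains K i. boundary K i f = (\<lambda>_. 0)}
             - vector_space.dim fscale (boundary K (i + 1) ` chains K (i + 1))"

definition up_degree :: "'a set set \<Rightarrow> 'a set \<Rightarrow> nat" where
  "up_degree K F = card {G \<in> faces K (card F). F \<subseteq> G}"

definition up_neighbors :: "'a set set \<Rightarrow> nat \<Rightarrow> 'a set \<Rightarrow> 'a set set" where
  "up_neighbors K i F = {F' \<in> faces K i. F' \<noteq> F \<and> F \<union> F' \<in> faces K (i + 1)}"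

definition signless_up_laplacian :: "'a set set \<Rightarrow> nat \<Rightarrow> ('a set \<Rightarrow> real) \<Rightarrow> ('a set \<Rightarrow> real)" where
  "signless_up_laplacian K i f = (\<lambda>F. if F \<in> faces K i
      then real (up_degree K F) * f F + (\<Sum>F'\<in>up_neighbors K i F. f F') else 0)"

definition is_eigenvalue_Qup :: "'a set set \<Rightarrow> nat \<Rightarrow> real \<Rightarrow> bool" where
  "is_eigenvalue_Qup K i \<mu> \<longleftrightarrow> (\<exists>f\<in>chains K i. f \<noteq> (\<lambda>_. 0) \<and>
      signless_up_laplacian K i f = (\<lambda>F. \<mu> * f F))"

definition q_up :: "'a set set \<Rightarrow> nat \<Rightarrow> real" where
  "q_up K i = Max {\<mu>. is_eigenvalue_Qup K i \<mu>}"

definition tented :: "nat \<Rightarrow> nat \<Rightarrow> nat set set" where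
  "tented n r = {G. \<exists>F. F \<subseteq> {1..n-1} \<and> card F = r \<and> G \<subseteq> insert n F}"

definition complex_iso :: "'a set \<Rightarrow> 'a set set \<Rightarrow> 'b set \<Rightarrow> 'b set set \<Rightarrow> bool" where
  "complex_iso V K W L \<longleftrightarrow> (\<exists>\<phi>. bij_betw \<phi> V W \<and> (\<lambda>F. \<phi> ` F) ` K = L)"

end

theory Submission
  imports Defs "Jordan_Normal_Form.Spectral_Radius"
begin


definition qc :: "'a set set \<Rightarrow> nat \<Rightarrow> 'a set \<Rightarrow> 'a set \<Rightarrow> real" where
  "qc K i F G = (if G = F then real (up_degree K F) else if G \<in> up_neighbors K i F then 1 else 0)"

lemma qc_sym: "F \<in> faces K i \<Longrightarrow> G \<in> faces K i \<Longrightarrow> qc K i F G = qc K i G F"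
  unfolding qc_def up_neighbors_def by (auto simp: Un_commute)

lemma Q_qc:
  assumes fin: "finite (faces K i)" and F: "F \<in> faces K i"
  shows "signless_up_laplacian K i f F = (\<Sum>G\<in>faces K i. qc K i F G * f G)"
proof -
  have "(\<Sum>G\<in>faces K i. qc K i F G * f G) = qc K i F F * f F + (\<Sum>G\<in>faces K i - {F}. qc K i F G * f G)"
    using fin F by (simp add: sum.remove)
  also have "(\<Sum>G\<in>faces K i - {F}. qc K i F G * f G) = (\<Sum>G\<in>faces K i - {F}. if G \<in> up_neighbors K i F then f G else 0)"
    unfolding qc_def by (intro sum.cong) auto
  also have "\<dots> = (\<Sum>G\<in>{G\<in>faces K i - {F}. G \<in> up_neighbors K i F}. f G)"
    using sum.inter_filter[of "faces K i - {F}" f "\<lambda>G. G \<in> up_neighbors K i F"] fin by simp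
  also have "{G\<in>faces K i - {F}. G \<in> up_neighbors K i F} = up_neighbors K i F"
    unfolding up_neighbors_def by auto
  finally show ?thesis unfolding signless_up_laplacian_def qc_def using F by simp
qed

lemma mat_vec_explicit:
  assumes "a < m" "v \<in> carrier_vec m"
  shows "vec_index (mat m m g *\<^sub>v v) a = (\<Sum>b<m. g (a, b) * vec_index v b)"
proof -
  have "vec_index (mat m m g *\<^sub>v v) a = row (mat m m g) a \<bullet> v" using assms by simp
  also have "\<dots> = (\<Sum>b\<in>{0..<m}. g (a, b) * vec_index v b)"
    unfolding scalar_prod_def using assms by (intro sum.cong) auto
  finally show ?thesis by (simp add: atLeast0LessThan)
qed

lemma mat_vec_explicit':
  assumes "a < m" "v \<in> carrier_vec m"
  shows "vec_index (mat m m g *\<^sub>v v) a = (\<Sum>b\<in>{0..<m}. g (a, b) * vec_index v b)"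
  using mat_vec_explicit[OF assms] by (simp add: atLeast0LessThan)


lemma eig_set_fin_ne:
  fixes K :: "'a set set"
  assumes fin: "finite (faces K i)" and ne: "faces K i \<noteq> {}"
  shows "finite {\<mu>. is_eigenvalue_Qup K i \<mu>} \<and> {\<mu>. is_eigenvalue_Qup K i \<mu>} \<noteq> {}"
proof -
  define \<Phi> where "\<Phi> = faces K i"
  define m where "m = card \<Phi>"
  have m0: "m > 0" unfolding m_def \<Phi>_def using fin ne by (simp add: card_gt_0_iff)
  obtain e where e: "bij_betw e {0..<m} \<Phi>" unfolding m_def using ex_bij_betw_nat_finite[of \<Phi>] fin \<Phi>_def by auto
  have einj: "inj_on e {0..<m}" and eimg: "e ` {0..<m} = \<Phi>" using e by (auto simp: bij_betw_def)
  have eP: "a < m \<Longrightarrow> e a \<in> \<Phi>" for a using eimg by auto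
  define A :: "real mat" where "A = mat m m (\<lambda>(a, b). qc K i (e a) (e b))"
  have Ac: "A \<in> carrier_mat m m" unfolding A_def by simp
  have Qe: "signless_up_laplacian K i f (e a) = (\<Sum>b\<in>{0..<m}. qc K i (e a) (e b) * f (e b))" if a: "a < m" for f a
  proof -
    have "signless_up_laplacian K i f (e a) = (\<Sum>G\<in>\<Phi>. qc K i (e a) G * f G)"
      using Q_qc[OF fin, of "e a"] eP[OF a] unfolding \<Phi>_def by simp
    also have "\<dots> = (\<Sum>b\<in>{0..<m}. qc K i (e a) (e b) * f (e b))"
      by (rule sum.reindex_bij_betw[OF e, symmetric])
    finally show ?thesis .
  qed
  have sub: "{\<mu>. is_eigenvalue_Qup K i \<mu>} \<subseteq> spectrum A"
  proof
    fix \<mu> assume "\<mu> \<in> {\<mu>. is_eigenvalue_Qup K i \<mu>}"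
    then obtain f where f: "f \<in> chains K i" "f \<noteq> (\<lambda>_. 0)" "signless_up_laplacian K i f = (\<lambda>F. \<mu> * f F)"
      unfolding is_eigenvalue_Qup_def by auto
    define v where "v = vec m (\<lambda>a. f (e a))"
    have vc: "v \<in> carrier_vec m" unfolding v_def by simp
    obtain F where F: "f F \<noteq> 0" using f(2) by auto
    then have "F \<in> \<Phi>" using f(1) unfolding chains_def \<Phi>_def by auto
    then obtain a where a: "a < m" "e a = F" using eimg by auto
    have vnz: "v \<noteq> 0\<^sub>v m"
    proof
      assume "v = 0\<^sub>v m"
      then have "vec_index v a = 0" using a by simp
      then show False using a F unfolding v_def by simp
    qed
    have "A *\<^sub>v v = \<mu> \<cdot>\<^sub>v v"
    proof (rule eq_vecI)
      show "dim_vec (A *\<^sub>v v) = dim_vec (\<mu> \<cdot>\<^sub>v v)" using Ac vc by simp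
      fix a assume "a < dim_vec (\<mu> \<cdot>\<^sub>v v)"
      then have a: "a < m" using vc by simp
      have "vec_index (A *\<^sub>v v) a = (\<Sum>b\<in>{0..<m}. qc K i (e a) (e b) * f (e b))"
        unfolding A_def using mat_vec_explicit'[OF a vc] by (simp add: v_def)
      also have "\<dots> = signless_up_laplacian K i f (e a)" using Qe[OF a] by simp
      also have "\<dots> = \<mu> * f (e a)" using f(3) by simp
      also have "\<dots> = vec_index (\<mu> \<cdot>\<^sub>v v) a" using a unfolding v_def by simp
      finally show "vec_index (A *\<^sub>v v) a = vec_index (\<mu> \<cdot>\<^sub>v v) a" .
    qed
    then have "eigenvector A v \<mu>" unfolding eigenvector_def using vc vnz Ac by simp
    then show "\<mu> \<in> spectrum A" unfolding spectrum_def eigenvalue_def by auto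
  qed
  have finS: "finite {\<mu>. is_eigenvalue_Qup K i \<mu>}"
    using finite_subset[OF sub card_finite_spectrum(1)[OF Ac]] .
  define Acx where "Acx = map_mat complex_of_real A"
  have Acxc: "Acx \<in> carrier_mat m m" unfolding Acx_def using Ac by simp
  obtain \<mu>c where "\<mu>c \<in> spectrum Acx" using spectrum_non_empty[OF Acxc m0] by auto
  then obtain w where w: "w \<in> carrier_vec m" "w \<noteq> 0\<^sub>v m" "Acx *\<^sub>v w = \<mu>c \<cdot>\<^sub>v w"
    unfolding spectrum_def eigenvalue_def eigenvector_def using Acxc by auto
  define q where "q = (\<lambda>a b. complex_of_real (qc K i (e a) (e b)))"
  have qs: "a < m \<Longrightarrow> b < m \<Longrightarrow> q a b = q b a" for a b unfolding q_def using qc_sym eP \<Phi>_def by metis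
  have Acx_eq: "Acx = mat m m (\<lambda>(a, b). q a b)"
    unfolding Acx_def A_def q_def by (rule eq_matI) auto
  define W where "W = (\<lambda>a. vec_index w a)"
  define s where "s = (\<Sum>a\<in>{0..<m}. cnj (W a) * vec_index (Acx *\<^sub>v w) a)"
  have s1: "s = (\<Sum>a\<in>{0..<m}. \<Sum>b\<in>{0..<m}. cnj (W a) * q a b * W b)"
    unfolding s_def W_def Acx_eq
  proof (intro sum.cong refl)
    fix a assume a: "a \<in> {0..<m}"
    have "vec_index (mat m m (\<lambda>(a, b). q a b) *\<^sub>v w) a = (\<Sum>b\<in>{0..<m}. (\<lambda>(a, b). q a b) (a, b) * vec_index w b)"
      by (rule mat_vec_explicit') (use a w(1) in auto)
    then show "cnj (vec_index w a) * vec_index (mat m m (\<lambda>(a, b). q a b) *\<^sub>v w) a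
        = (\<Sum>b\<in>{0..<m}. cnj (vec_index w a) * q a b * vec_index w b)"
      by (simp add: sum_distrib_left mult.assoc)
  qed
  have "cnj s = (\<Sum>a\<in>{0..<m}. \<Sum>b\<in>{0..<m}. W a * q a b * cnj (W b))"
    unfolding s1 q_def by (simp add: cnj_sum)
  also have "\<dots> = (\<Sum>b\<in>{0..<m}. \<Sum>a\<in>{0..<m}. W a * q a b * cnj (W b))" by (rule sum.swap)
  also have "\<dots> = s" unfolding s1 using qs by (intro sum.cong refl) (simp add: mult.commute)
  finally have cs: "cnj s = s" .
  then have Ims: "Im s = 0" by (metis complex_cnj_cancel_iff complex_cnj_zero_iff complex_eq_iff
        cnj.simps(2) add.inverse_unique neg_equal_zero)
  define Nr where "Nr = (\<Sum>a\<in>{0..<m}. (cmod (W a))\<^sup>2)"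
  have s2: "s = \<mu>c * complex_of_real Nr"
  proof -
    have "s = (\<Sum>a\<in>{0..<m}. cnj (W a) * (\<mu>c * W a))"
      unfolding s_def W_def using w(3) w(1) by (intro sum.cong refl) simp
    also have "\<dots> = \<mu>c * (\<Sum>a\<in>{0..<m}. W a * cnj (W a))" by (simp add: sum_distrib_left ac_simps)
    also have "(\<Sum>a\<in>{0..<m}. W a * cnj (W a)) = complex_of_real Nr"
      unfolding Nr_def of_real_sum by (intro sum.cong refl) (simp only: complex_norm_square)
    finally show ?thesis .
  qed
  have Npos: "Nr > 0"
  proof -
    obtain a where a: "a < m" "W a \<noteq> 0"
    proof (rule ccontr)
      assume "\<not> thesis"
      then have "\<forall>a<m. W a = 0" using that by blast
      then have "w = 0\<^sub>v m" using w(1) unfolding W_def by (intro eq_vecI) auto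
      then show False using w(2) by simp
    qed
    have "(cmod (W a))\<^sup>2 > 0" using a by simp
    moreover have "(cmod (W a))\<^sup>2 \<le> Nr" unfolding Nr_def using a
      by (intro member_le_sum) auto
    ultimately show ?thesis by linarith
  qed
  have "Im \<mu>c * Nr = 0" using Ims s2 by simp
  then have "Im \<mu>c = 0" using Npos by simp
  then have \<mu>r: "\<mu>c = complex_of_real (Re \<mu>c)" by (simp add: complex_eq_iff)
  define t where "t = Re \<mu>c"
  have "eigenvalue Acx \<mu>c" using w Acxc unfolding eigenvalue_def eigenvector_def by auto
  then have "poly (char_poly Acx) (complex_of_real t) = 0"
    using eigenvalue_root_char_poly[OF Acxc] \<mu>r t_def by simp
  moreover have "char_poly Acx = map_poly complex_of_real (char_poly A)"
    unfolding Acx_def using of_real_hom.char_poly_hom[OF Ac] by simp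
  ultimately have "poly (char_poly A) t = 0" by (simp add: of_real_hom.poly_map_poly)
  then have "eigenvalue A t" using eigenvalue_root_char_poly[OF Ac] by simp
  then obtain v where v: "v \<in> carrier_vec m" "v \<noteq> 0\<^sub>v m" "A *\<^sub>v v = t \<cdot>\<^sub>v v"
    unfolding eigenvalue_def eigenvector_def using Ac by auto
  define f where "f = (\<lambda>F. if F \<in> \<Phi> then vec_index v (the_inv_into {0..<m} e F) else 0)"
  have fe: "a < m \<Longrightarrow> f (e a) = vec_index v a" for a
    unfolding f_def using eP the_inv_into_f_f[OF einj] by simp
  have fc: "f \<in> chains K i" unfolding chains_def f_def \<Phi>_def by auto
  have fnz: "f \<noteq> (\<lambda>_. 0)"
  proof
    assume f0: "f = (\<lambda>_. 0)"
    have "v = 0\<^sub>v m"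
    proof (rule eq_vecI)
      fix a assume "a < dim_vec (0\<^sub>v m :: real vec)"
      then have a: "a < m" by simp
      have "vec_index v a = f (e a)" using fe[OF a] by simp
      then show "vec_index v a = vec_index (0\<^sub>v m) a" using f0 a by simp
    qed (use v(1) in simp)
    then show False using v(2) by simp
  qed
  have "signless_up_laplacian K i f = (\<lambda>F. t * f F)"
  proof
    fix F
    show "signless_up_laplacian K i f F = t * f F"
    proof (cases "F \<in> \<Phi>")
      case False
      then show ?thesis unfolding signless_up_laplacian_def f_def \<Phi>_def by simp
    next
      case True
      then obtain a where a: "a < m" "F = e a" using eimg by auto
      have "signless_up_laplacian K i f F = (\<Sum>b\<in>{0..<m}. qc K i (e a) (e b) * f (e b))"
        using Qe[OF a(1)] a by simp
      also have "\<dots> = (\<Sum>b\<in>{0..<m}. qc K i (e a) (e b) * vec_index v b)" using fe by simp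
      also have "\<dots> = vec_index (A *\<^sub>v v) a" unfolding A_def using mat_vec_explicit'[OF a(1) v(1)] by simp
      also have "\<dots> = t * vec_index v a" using v a by simp
      also have "\<dots> = t * f F" using fe a by simp
      finally show ?thesis .
    qed
  qed
  then have "is_eigenvalue_Qup K i t" unfolding is_eigenvalue_Qup_def using fc fnz by blast
  then show ?thesis using finS by blast
qed




lemma vs_fscale: "vector_space (fscale :: real \<Rightarrow> ('a set \<Rightarrow> real) \<Rightarrow> _)"
  unfolding vector_space_def fscale_def by (auto simp: fun_eq_iff algebra_simps)

lemma sign_sq: "incidence_sign S F * incidence_sign S F = 1"
  unfolding incidence_sign_def by (simp add: power_mult_distrib[symmetric])

lemma sign_nz: "incidence_sign S F \<noteq> 0"
  unfolding incidence_sign_def by simp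

lemma sign_insert:
  assumes "a \<notin> G" "finite G"
  shows "incidence_sign (insert a G) G = (-1) ^ card {w\<in>G. w < a}"
proof -
  have "(THE v. v \<in> insert a G - G) = a" using assms by auto
  moreover have "{w \<in> insert a G. w < a} = {w\<in>G. w < a}" by auto
  ultimately show ?thesis unfolding incidence_sign_def by simp
qed

lemma sign_remove:
  assumes "b \<in> S"
  shows "incidence_sign S (S - {b}) = (-1) ^ card {w\<in>S. w < b}"
proof -
  have "(THE v. v \<in> S - (S - {b})) = b" using assms by auto
  then show ?thesis unfolding incidence_sign_def by simp
qed

text \<open>The key cancellation: boundary of boundary vanishes.\<close>
lemma dd_zero:
  fixes S G :: "'a::linorder set"
  assumes "finite S" "card S = card G + 2"
  shows "(\<Sum>F\<in>{F. G \<subseteq> F \<and> F \<subseteq> S \<and> card F = card G + 1}.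
            incidence_sign F G * incidence_sign S F) = 0"
proof (cases "G \<subseteq> S")
  case False
  then have "{F. G \<subseteq> F \<and> F \<subseteq> S \<and> card F = card G + 1} = {}" by auto
  then show ?thesis by (simp only: sum.empty)
next
  case True
  have fG: "finite G" using True assms(1) finite_subset by blast
  have "card (S - G) = 2" using True assms fG by (simp add: card_Diff_subset)
  then obtain x y where xy: "S - G = {x, y}" "x \<noteq> y" by (meson card_2_iff)
  obtain a b where ab: "S - G = {a, b}" "a \<noteq> b" and lt: "a < b"
  proof (cases "x < y")
    case True then show ?thesis using that xy by blast
  next
    case False then have "y < x" using xy(2) by simp
    then show ?thesis using that[of y x] xy by (simp add: insert_commute)
  qed
  have aG: "a \<notin> G" "b \<notin> G" "a \<in> S" "b \<in> S" using ab by auto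
  have Seq: "S = insert a (insert b G)" using ab True by auto
  have Fs: "{F. G \<subseteq> F \<and> F \<subseteq> S \<and> card F = card G + 1} = {insert a G, insert b G}"
  proof (rule Set.set_eqI, rule HOL.iffI)
    fix F assume F: "F \<in> {F. G \<subseteq> F \<and> F \<subseteq> S \<and> card F = card G + 1}"
    then have fF: "finite F" using assms(1) finite_subset by blast
    have "card (F - G) = 1" using F fF fG by (simp add: card_Diff_subset)
    then obtain x where x: "F - G = {x}" by (meson card_1_singletonE)
    then have "x \<in> S - G" using F by auto
    then have "x = a \<or> x = b" using ab by auto
    moreover have "F = insert x G" using x F by auto
    ultimately show "F \<in> {insert a G, insert b G}" by auto
  next
    fix F assume "F \<in> {insert a G, insert b G}"
    then show "F \<in> {F. G \<subseteq> F \<and> F \<subseteq> S \<and> card F = card G + 1}"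
      using aG fG Seq by auto
  qed
  have ne: "insert a G \<noteq> insert b G" using aG ab by auto
  have s1: "incidence_sign (insert a G) G = (-1) ^ card {w\<in>G. w < a}"
    by (rule sign_insert[OF aG(1) fG])
  have s2: "incidence_sign (insert b G) G = (-1) ^ card {w\<in>G. w < b}"
    by (rule sign_insert[OF aG(2) fG])
  have "insert a G = S - {b}" using Seq aG ab by auto
  then have s3: "incidence_sign S (insert a G) = (-1) ^ card {w\<in>S. w < b}"
    using sign_remove[OF aG(4)] by simp
  have "insert b G = S - {a}" using Seq aG ab by auto
  then have s4: "incidence_sign S (insert b G) = (-1) ^ card {w\<in>S. w < a}"
    using sign_remove[OF aG(3)] by simp
  have c3: "{w\<in>S. w < b} = insert a {w\<in>G. w < b}" using Seq lt by auto
  have c3': "card {w\<in>S. w < b} = Suc (card {w\<in>G. w < b})"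
    unfolding c3 using aG fG by simp
  have c4: "{w\<in>S. w < a} = {w\<in>G. w < a}" using Seq lt by auto
  show ?thesis unfolding Fs using ne
    by (simp add: s1 s2 s3 s4 c3' c4)
qed


lemma sum_fun_apply:
  "finite A \<Longrightarrow> (\<Sum>x\<in>A. (f x :: 'b \<Rightarrow> 'c::comm_monoid_add)) y = (\<Sum>x\<in>A. f x y)"
  by (induct rule: finite_induct) (auto simp: plus_fun_def zero_fun_def)

lemma card_filter_sum: "finite A \<Longrightarrow> card {x\<in>A. P x} = (\<Sum>x\<in>A. if P x then 1 else 0)"
proof -
  assume fA: "finite A"
  have "card {x\<in>A. P x} = (\<Sum>x\<in>{x\<in>A. P x}. 1)" by (rule card_eq_sum)
  also have "\<dots> = (\<Sum>x\<in>A. if P x then 1 else 0)" by (rule sum.inter_filter[OF fA])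
  finally show ?thesis .
qed

locale scx =
  fixes V :: "'a::linorder set" and K :: "'a set set" and r :: nat
  assumes sc: "simplicial_complex V K" and pure: "pure_dim K r" and r1: "r \<ge> 1"
begin

lemma finV: "finite V" using sc unfolding simplicial_complex_def by auto
lemma KV: "F \<in> K \<Longrightarrow> F \<subseteq> V" using sc unfolding simplicial_complex_def by auto
lemma Kdown: "F \<in> K \<Longrightarrow> G \<subseteq> F \<Longrightarrow> G \<in> K" using sc unfolding simplicial_complex_def by auto
lemma Ksing: "v \<in> V \<Longrightarrow> {v} \<in> K" using sc unfolding simplicial_complex_def by auto
lemma finF: "F \<in> K \<Longrightarrow> finite F" using KV finV finite_subset by blast
lemma finK: "finite K"
proof -
  have "K \<subseteq> Pow V" using KV by auto
  then show ?thesis using finV finite_subset by blast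
qed
lemma fin_faces: "finite (faces K i)" using finK unfolding faces_def by auto

lemma facet_above:
  assumes "F \<in> K" shows "\<exists>G\<in>facets K. F \<subseteq> G"
proof -
  have "finite {G\<in>K. F \<subseteq> G}" using finK by auto
  from finite_has_maximal2[OF this, of F] assms obtain m where
    m: "m \<in> K" "F \<subseteq> m" "\<forall>b\<in>{G\<in>K. F \<subseteq> G}. m \<le> b \<longrightarrow> m = b" by auto
  then have "m \<in> facets K" unfolding facets_def using m by auto
  then show ?thesis using m by auto
qed

lemma facet_card: "G \<in> facets K \<Longrightarrow> card G = r + 1"
  using pure unfolding pure_dim_def by auto

lemma card_le: assumes "F \<in> K" shows "card F \<le> r + 1"
proof -
  obtain G where G: "G \<in> facets K" "F \<subseteq> G" using facet_above[OF assms] by auto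
  have "G \<in> K" using G unfolding facets_def by auto
  then show ?thesis using card_mono[OF finF G(2)] facet_card[OF G(1)] by simp
qed

lemma in_face_r: assumes "F \<in> K" shows "\<exists>G\<in>faces K r. F \<subseteq> G"
proof -
  obtain G where G: "G \<in> facets K" "F \<subseteq> G" using facet_above[OF assms] by auto
  then show ?thesis using facet_card[OF G(1)] unfolding facets_def faces_def by auto
qed

lemma faces_top_empty: "faces K (r + 1) = {}"
  using card_le unfolding faces_def by fastforce

lemma chains_top: "chains K (r + 1) = {\<lambda>_. 0}"
  unfolding chains_def faces_top_empty by auto

lemma cycle_false:
  assumes betti: "betti K r = 0"
    and zf: "\<And>F. z F \<noteq> 0 \<Longrightarrow> F \<in> faces K r"
    and znz: "z \<noteq> (\<lambda>_. 0)"
    and zb: "boundary K r z = (\<lambda>_. 0)"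
  shows False
proof -
  interpret vs: vector_space "fscale :: real \<Rightarrow> ('a set \<Rightarrow> real) \<Rightarrow> _" by (rule vs_fscale)
  have img: "boundary K (r + 1) ` chains K (r + 1) = {0}"
    unfolding chains_top by (auto simp: boundary_def fun_eq_iff zero_fun_def)
  have d0: "vs.dim {0} = 0"
  proof -
    have "vs.dim {0} = vs.dim (vs.span {})" by simp
    also have "\<dots> = vs.dim {}" by (rule vs.dim_span)
    also have "\<dots> = 0" using vs.dim_eq_card_independent[OF vs.independent_empty] by simp
    finally show ?thesis .
  qed
  define Ker where "Ker = {f \<in> chains K r. boundary K r f = (\<lambda>_. 0)}"
  have dK: "vs.dim Ker = 0" using betti img d0 unfolding betti_def Ker_def by simp
  obtain B where B: "B \<subseteq> Ker" "vs.independent B" "Ker \<subseteq> vs.span B" "card B = vs.dim Ker"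
    using vs.basis_exists by blast
  define T where "T = (\<lambda>F. (\<lambda>G. if G = F then 1 else 0 :: real)) ` faces K r"
  have chT: "chains K r \<subseteq> vs.span T"
  proof
    fix f assume f: "f \<in> chains K r"
    have "f = (\<Sum>F\<in>faces K r. fscale (f F) (\<lambda>G. if G = F then 1 else 0))"
    proof
      fix G
      have "(\<Sum>F\<in>faces K r. fscale (f F) (\<lambda>G. if G = F then 1 else 0)) G
            = (\<Sum>F\<in>faces K r. f F * (if G = F then 1 else 0))"
        by (simp add: sum_fun_apply[OF fin_faces] fscale_def)
      also have "\<dots> = f G" using f fin_faces unfolding chains_def
        by (auto simp: if_distrib cong: if_cong)
      finally show "f G = (\<Sum>F\<in>faces K r. fscale (f F) (\<lambda>G. if G = F then 1 else 0)) G" by simp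
    qed
    also have "\<dots> \<in> vs.span T"
      by (intro vs.span_sum vs.span_scale vs.span_base) (auto simp: T_def)
    finally show "f \<in> vs.span T" .
  qed
  have "finite T" unfolding T_def using fin_faces by simp
  then have "finite B" using vs.independent_span_bound[OF _ B(2)] B(1) chT
    unfolding Ker_def by blast
  then have "B = {}" using B(4) dK by simp
  then have "Ker \<subseteq> {0}" using B(3) by simp
  moreover have "z \<in> Ker" unfolding Ker_def chains_def using zf zb by auto
  ultimately show False using znz by (auto simp: zero_fun_def)
qed


definition bdz :: "'a set set \<Rightarrow> ('a set \<Rightarrow> real) \<Rightarrow> 'a set \<Rightarrow> real" where
  "bdz Ss c = (\<lambda>F. if card F = r + 1 then (\<Sum>S\<in>Ss. if F \<subseteq> S then incidence_sign S F * c S else 0) else 0)"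

lemma bdz_false:
  assumes betti: "betti K r = 0"
    and fS: "finite Ss" and cS: "\<And>S. S \<in> Ss \<Longrightarrow> card S = r + 2 \<and> finite S"
    and hK: "\<And>F. bdz Ss c F \<noteq> 0 \<Longrightarrow> F \<in> K"
    and nz: "bdz Ss c \<noteq> (\<lambda>_. 0)"
  shows False
proof (rule cycle_false[OF betti _ nz])
  let ?z = "bdz Ss c"
  show zf: "?z F \<noteq> 0 \<Longrightarrow> F \<in> faces K r" for F
    using hK[of F] unfolding faces_def by (auto simp: bdz_def split: if_splits)
  show "boundary K r ?z = (\<lambda>_. 0)"
  proof
    fix G
    show "boundary K r ?z G = 0"
    proof (cases "G \<in> faces K (r - 1)")
      case False then show ?thesis by (simp add: boundary_def)
    next
      case True
      then have cG: "card G = r" using r1 unfolding faces_def by auto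
      define A where "A = {F \<in> faces K r. G \<subseteq> F}"
      define B where "B = {F. G \<subseteq> F \<and> card F = r + 1 \<and> (\<exists>S\<in>Ss. F \<subseteq> S)}"
      have finU: "finite (\<Union>Ss)" using fS cS by auto
      have finB: "finite B"
      proof -
        have "B \<subseteq> Pow (\<Union>Ss)" unfolding B_def by auto
        then show ?thesis using finU finite_subset by blast
      qed
      have finA: "finite A" unfolding A_def using fin_faces by simp
      have zA: "?z F = 0" if "F \<in> A - B" for F
        using that unfolding A_def B_def faces_def bdz_def
        by (auto intro!: sum.neutral)
      have zB: "?z F = 0" if "F \<in> B - A" for F
        using that zf[of F] unfolding A_def B_def faces_def by auto
      have "(\<Sum>F\<in>A. incidence_sign F G * ?z F) = (\<Sum>F\<in>A \<inter> B. incidence_sign F G * ?z F)"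
        using zA finA by (intro sum.mono_neutral_right) auto
      also have "\<dots> = (\<Sum>F\<in>B. incidence_sign F G * ?z F)"
        using zB finB by (intro sum.mono_neutral_left) auto
      also have "\<dots> = (\<Sum>F\<in>B. \<Sum>S\<in>Ss. incidence_sign F G * (if F \<subseteq> S then incidence_sign S F * c S else 0))"
        unfolding bdz_def B_def by (auto simp: sum_distrib_left intro!: sum.cong)
      also have "\<dots> = (\<Sum>S\<in>Ss. \<Sum>F\<in>B. incidence_sign F G * (if F \<subseteq> S then incidence_sign S F * c S else 0))"
        by (rule sum.swap)
      also have "\<dots> = (\<Sum>S\<in>Ss. c S * (\<Sum>F\<in>{F. G \<subseteq> F \<and> F \<subseteq> S \<and> card F = card G + 1}. incidence_sign F G * incidence_sign S F))"
      proof (rule sum.cong[OF refl])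
        fix S assume S: "S \<in> Ss"
        have eq: "{F. G \<subseteq> F \<and> F \<subseteq> S \<and> card F = card G + 1} = {F\<in>B. F \<subseteq> S}"
          using S cG unfolding B_def by auto
        have "(\<Sum>F\<in>B. incidence_sign F G * (if F \<subseteq> S then incidence_sign S F * c S else 0))
            = (\<Sum>F\<in>B. if F \<subseteq> S then c S * (incidence_sign F G * incidence_sign S F) else 0)"
          by (intro sum.cong) auto
        also have "\<dots> = (\<Sum>F\<in>{F\<in>B. F \<subseteq> S}. c S * (incidence_sign F G * incidence_sign S F))"
          using finB by (simp add: sum.inter_filter)
        also have "\<dots> = c S * (\<Sum>F\<in>{F. G \<subseteq> F \<and> F \<subseteq> S \<and> card F = card G + 1}. incidence_sign F G * incidence_sign S F)"
          unfolding eq by (simp add: sum_distrib_left)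
        finally show "(\<Sum>F\<in>B. incidence_sign F G * (if F \<subseteq> S then incidence_sign S F * c S else 0)) = \<dots>" .
      qed
      also have "\<dots> = 0"
      proof (intro sum.neutral ballI)
        fix S assume S: "S \<in> Ss"
        then have h: "finite S" "card S = card G + 2" using cS[OF S] cG by auto
        show "c S * (\<Sum>F\<in>{F. G \<subseteq> F \<and> F \<subseteq> S \<and> card F = card G + 1}. incidence_sign F G * incidence_sign S F) = 0"
          by (simp only: dd_zero[OF h] mult_zero_right)
      qed
      finally show ?thesis using True by (simp add: boundary_def A_def)
    qed
  qed
qed


lemma sub_card1:
  assumes "finite S" "F \<subseteq> S" "card S = card F + 1"
  shows "\<exists>t\<in>S. F = S - {t}"
proof -
  have "card (S - F) = 1" using assms by (simp add: card_Diff_subset finite_subset)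
  then obtain t where t: "S - F = {t}" by (meson card_1_singletonE)
  then show ?thesis using assms(2) by auto
qed

lemma simplex_false:
  assumes betti: "betti K r = 0" and T: "finite T" "card T = r + 2"
    and all: "\<And>t. t \<in> T \<Longrightarrow> T - {t} \<in> K"
  shows False
proof (rule bdz_false[OF betti, of "{T}" "\<lambda>_. 1"])
  show "finite {T}" by simp
  show "\<And>S. S \<in> {T} \<Longrightarrow> card S = r + 2 \<and> finite S" using T by auto
  show "bdz {T} (\<lambda>_. 1) F \<noteq> 0 \<Longrightarrow> F \<in> K" for F
  proof -
    assume "bdz {T} (\<lambda>_. 1) F \<noteq> 0"
    then have "card F = r + 1" "F \<subseteq> T" unfolding bdz_def by (auto split: if_splits)
    then have "\<exists>t\<in>T. F = T - {t}" using sub_card1[OF T(1), of F] T(2) by simp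
    then obtain t where "t \<in> T" "F = T - {t}" by blast
    then show ?thesis using all by auto
  qed
  obtain t where t: "t \<in> T" using T by fastforce
  have "card (T - {t}) = r + 1" using T t by simp
  then have "bdz {T} (\<lambda>_. 1) (T - {t}) \<noteq> 0" unfolding bdz_def by (simp add: sign_nz)
  then show "bdz {T} (\<lambda>_. 1) \<noteq> (\<lambda>_. 0)" by auto
qed

lemma two_simplex_false:
  assumes betti: "betti K r = 0"
    and S: "finite S1" "finite S2" "card S1 = r + 2" "card S2 = r + 2"
    and P: "S1 \<inter> S2 = P" "card P = r + 1"
    and all: "\<And>F. F \<subseteq> S1 \<or> F \<subseteq> S2 \<Longrightarrow> card F = r + 1 \<Longrightarrow> F \<noteq> P \<Longrightarrow> F \<in> K"
  shows False
proof -
  have ne: "S1 \<noteq> S2" using P S by auto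
  define c where "c = (\<lambda>S. if S = S1 then 1 else - (incidence_sign S1 P * incidence_sign S2 P))"
  have zv: "bdz {S1, S2} c F = (if card F = r + 1 then (if F \<subseteq> S1 then incidence_sign S1 F else 0)
     + (if F \<subseteq> S2 then incidence_sign S2 F * (- (incidence_sign S1 P * incidence_sign S2 P)) else 0) else 0)" for F
    unfolding bdz_def c_def using ne by simp
  show False
  proof (rule bdz_false[OF betti, of "{S1, S2}" c])
    show "finite {S1, S2}" by simp
    show "\<And>S. S \<in> {S1, S2} \<Longrightarrow> card S = r + 2 \<and> finite S" using S by auto
    show "bdz {S1, S2} c F \<noteq> 0 \<Longrightarrow> F \<in> K" for F
    proof -
      assume nz: "bdz {S1, S2} c F \<noteq> 0"
      then have cF: "card F = r + 1" unfolding zv by (auto split: if_splits)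
      have sub: "F \<subseteq> S1 \<or> F \<subseteq> S2" using nz unfolding zv by (auto split: if_splits)
      have "F \<noteq> P"
      proof
        assume FP: "F = P"
        then have "F \<subseteq> S1" "F \<subseteq> S2" using P by auto
        then have "bdz {S1, S2} c F = incidence_sign S1 P - incidence_sign S1 P * (incidence_sign S2 P * incidence_sign S2 P)"
          unfolding zv using cF FP by (simp add: algebra_simps)
        then show False using nz sign_sq[of S2 P] by simp
      qed
      then show ?thesis using all sub cF by auto
    qed
    obtain t where t: "t \<in> P" using P(2) by fastforce
    have tS1: "t \<in> S1" using t P by auto
    define F where "F = S1 - {t}"
    have cF: "card F = r + 1" unfolding F_def using S tS1 by simp
    have "\<not> F \<subseteq> S2"
    proof
      assume "F \<subseteq> S2"
      then have "F \<subseteq> P" using P unfolding F_def by auto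
      then have "F = P" using card_subset_eq[of P F] P cF S finite_subset by (metis Int_lower1 infinite_super)
      then show False using t unfolding F_def by auto
    qed
    then have "bdz {S1, S2} c F = incidence_sign S1 F" unfolding zv using cF F_def by auto
    then show "bdz {S1, S2} c \<noteq> (\<lambda>_. 0)" using sign_nz by (metis)
  qed
qed


lemma Q_BB:
  assumes F: "F \<in> faces K i"
  shows "signless_up_laplacian K i f F =
    (\<Sum>\<sigma>\<in>{\<sigma>\<in>faces K (i + 1). F \<subseteq> \<sigma>}. \<Sum>F'\<in>{F'\<in>faces K i. F' \<subseteq> \<sigma>}. f F')"
proof -
  let ?A = "{\<sigma>\<in>faces K (i + 1). F \<subseteq> \<sigma>}"
  let ?B = "faces K i"
  have finA: "finite ?A" and finB: "finite ?B" using fin_faces by auto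
  have cF: "card F = i + 1" using F unfolding faces_def by auto
  have split: "(\<Sum>F'\<in>{F'\<in>?B. F' \<subseteq> \<sigma>}. f F') = f F + (\<Sum>F'\<in>{F'\<in>?B. F' \<subseteq> \<sigma> \<and> F' \<noteq> F}. f F')"
    if "\<sigma> \<in> ?A" for \<sigma>
  proof -
    have "{F'\<in>?B. F' \<subseteq> \<sigma>} = insert F {F'\<in>?B. F' \<subseteq> \<sigma> \<and> F' \<noteq> F}" using that F by auto
    then show ?thesis using finB by simp
  qed
  have "(\<Sum>\<sigma>\<in>?A. \<Sum>F'\<in>{F'\<in>?B. F' \<subseteq> \<sigma>}. f F')
      = (\<Sum>\<sigma>\<in>?A. f F) + (\<Sum>\<sigma>\<in>?A. \<Sum>F'\<in>{F'\<in>?B. F' \<subseteq> \<sigma> \<and> F' \<noteq> F}. f F')"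
    by (simp add: split sum.distrib)
  also have "(\<Sum>\<sigma>\<in>?A. f F) = real (up_degree K F) * f F"
    unfolding up_degree_def cF by simp
  also have "(\<Sum>\<sigma>\<in>?A. \<Sum>F'\<in>{F'\<in>?B. F' \<subseteq> \<sigma> \<and> F' \<noteq> F}. f F')
      = (\<Sum>F'\<in>?B. \<Sum>\<sigma>\<in>{\<sigma>\<in>?A. F' \<subseteq> \<sigma> \<and> F' \<noteq> F}. f F')"
    using sum.swap_restrict[OF finA finB, of "\<lambda>\<sigma> F'. f F'" "\<lambda>\<sigma> F'. F' \<subseteq> \<sigma> \<and> F' \<noteq> F"] by simp
  also have "\<dots> = (\<Sum>F'\<in>?B. if F' \<in> up_neighbors K i F then f F' else 0)"
  proof (rule sum.cong[OF refl])
    fix F' assume F': "F' \<in> ?B"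
    show "(\<Sum>\<sigma>\<in>{\<sigma>\<in>?A. F' \<subseteq> \<sigma> \<and> F' \<noteq> F}. f F') = (if F' \<in> up_neighbors K i F then f F' else 0)"
    proof (cases "F' \<in> up_neighbors K i F")
      case True
      then have nb: "F' \<noteq> F" "F \<union> F' \<in> faces K (i + 1)" unfolding up_neighbors_def by auto
      have "{\<sigma>\<in>?A. F' \<subseteq> \<sigma> \<and> F' \<noteq> F} = {F \<union> F'}"
      proof (rule Set.set_eqI, rule HOL.iffI)
        fix \<sigma> assume s: "\<sigma> \<in> {\<sigma>\<in>?A. F' \<subseteq> \<sigma> \<and> F' \<noteq> F}"
        then have "F \<union> F' \<subseteq> \<sigma>" by auto
        moreover have "finite \<sigma>" using s finF unfolding faces_def by auto
        moreover have "card \<sigma> = card (F \<union> F')" using s nb unfolding faces_def by auto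
        ultimately have "\<sigma> = F \<union> F'" using card_subset_eq by metis
        then show "\<sigma> \<in> {F \<union> F'}" by simp
      qed (use nb in auto)
      then show ?thesis using True by simp
    next
      case False
      have "{\<sigma>\<in>?A. F' \<subseteq> \<sigma> \<and> F' \<noteq> F} = {}"
      proof (rule ccontr)
        assume "{\<sigma>\<in>?A. F' \<subseteq> \<sigma> \<and> F' \<noteq> F} \<noteq> {}"
        then obtain \<sigma> where s: "\<sigma> \<in> faces K (i + 1)" "F \<subseteq> \<sigma>" "F' \<subseteq> \<sigma>" "F' \<noteq> F" by auto
        have fs: "finite \<sigma>" using s finF unfolding faces_def by auto
        have cF': "card F' = i + 1" using F' unfolding faces_def by auto
        have "\<not> F' \<subseteq> F"
        proof
          assume "F' \<subseteq> F"
          then have "F' = F" using card_subset_eq[of F F'] cF cF' finF F unfolding faces_def by auto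
          then show False using s by simp
        qed
        then have "F \<subset> F \<union> F'" by auto
        then have "card F < card (F \<union> F')" using fs s by (meson Un_least finite_subset psubset_card_mono)
        moreover have "card (F \<union> F') \<le> card \<sigma>" using fs s by (simp add: card_mono)
        moreover have "card \<sigma> = i + 2" using s unfolding faces_def by auto
        ultimately have "card (F \<union> F') = card \<sigma>" using cF by simp
        then have "F \<union> F' = \<sigma>" using card_subset_eq[OF fs] s by auto
        then have "F' \<in> up_neighbors K i F" using s F' unfolding up_neighbors_def by auto
        then show False using False by simp
      qed
      note e = this
      show ?thesis unfolding e using False by simp
    qed
  qed
  also have "\<dots> = (\<Sum>F'\<in>up_neighbors K i F. f F')"
  proof -
    have e: "{F'\<in>?B. F' \<in> up_neighbors K i F} = up_neighbors K i F" unfolding up_neighbors_def by auto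
    show ?thesis using sum.inter_filter[OF finB, of f "\<lambda>F'. F' \<in> up_neighbors K i F"] unfolding e by simp
  qed
  finally show ?thesis unfolding signless_up_laplacian_def using F by simp
qed

definition Wt :: "'a set \<Rightarrow> nat" where
  "Wt \<sigma> = (\<Sum>F\<in>{F\<in>faces K (r - 1). F \<subseteq> \<sigma>}. up_degree K F)"

definition Nc :: "'a set \<Rightarrow> 'a \<Rightarrow> nat" where
  "Nc \<sigma> w = card {v\<in>\<sigma>. insert w (\<sigma> - {v}) \<in> K}"

lemma subfaces_eq:
  assumes s: "\<sigma> \<in> faces K r"
  shows "{F\<in>faces K (r - 1). F \<subseteq> \<sigma>} = (\<lambda>v. \<sigma> - {v}) ` \<sigma>"
proof -
  have fs: "finite \<sigma>" "card \<sigma> = r + 1" "\<sigma> \<in> K" using s finF unfolding faces_def by auto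
  show ?thesis
  proof (rule Set.set_eqI, rule HOL.iffI)
    fix F assume F: "F \<in> {F\<in>faces K (r - 1). F \<subseteq> \<sigma>}"
    then have "card \<sigma> = card F + 1" using fs r1 unfolding faces_def by auto
    then obtain t where "t \<in> \<sigma>" "F = \<sigma> - {t}" using sub_card1[OF fs(1)] F by blast
    then show "F \<in> (\<lambda>v. \<sigma> - {v}) ` \<sigma>" by auto
  next
    fix F assume "F \<in> (\<lambda>v. \<sigma> - {v}) ` \<sigma>"
    then obtain v where v: "v \<in> \<sigma>" "F = \<sigma> - {v}" by auto
    then have "card F = r - 1 + 1" using fs r1 by simp
    moreover have "F \<in> K" using Kdown[OF fs(3)] v by auto
    ultimately show "F \<in> {F\<in>faces K (r - 1). F \<subseteq> \<sigma>}" using v unfolding faces_def by auto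
  qed
qed

lemma up_degree_sub:
  assumes s: "\<sigma> \<in> faces K r" and v: "v \<in> \<sigma>"
  shows "up_degree K (\<sigma> - {v}) = 1 + card {w\<in>V - \<sigma>. insert w (\<sigma> - {v}) \<in> K}"
proof -
  have fs: "finite \<sigma>" "card \<sigma> = r + 1" "\<sigma> \<in> K" using s finF unfolding faces_def by auto
  have c: "card (\<sigma> - {v}) = r" using fs v by simp
  let ?S = "{w\<in>V - \<sigma>. insert w (\<sigma> - {v}) \<in> K}"
  have eq: "{G\<in>faces K r. \<sigma> - {v} \<subseteq> G} = insert \<sigma> ((\<lambda>w. insert w (\<sigma> - {v})) ` ?S)"
  proof (rule Set.set_eqI, rule HOL.iffI)
    fix G assume G: "G \<in> {G\<in>faces K r. \<sigma> - {v} \<subseteq> G}"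
    then have fG: "finite G" "card G = r + 1" "G \<in> K" using finF unfolding faces_def by auto
    then have "card G = card (\<sigma> - {v}) + 1" using c by simp
    moreover have "card (G - (\<sigma> - {v})) = card G - card (\<sigma> - {v})"
      by (rule card_Diff_subset) (use fs G in auto)
    ultimately have "card (G - (\<sigma> - {v})) = 1" by simp
    then obtain w where w: "G - (\<sigma> - {v}) = {w}" by (meson card_1_singletonE)
    then have Gw: "G = insert w (\<sigma> - {v})" using G by auto
    show "G \<in> insert \<sigma> ((\<lambda>w. insert w (\<sigma> - {v})) ` ?S)"
    proof (cases "w \<in> \<sigma>")
      case True
      then have "w = v" using w by auto
      then have "G = \<sigma>" using Gw v by auto
      then show ?thesis by simp
    next
      case False
      then have "w \<in> V" using KV[OF fG(3)] Gw by auto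
      then show ?thesis using False Gw fG(3) by auto
    qed
  next
    fix G assume "G \<in> insert \<sigma> ((\<lambda>w. insert w (\<sigma> - {v})) ` ?S)"
    then show "G \<in> {G\<in>faces K r. \<sigma> - {v} \<subseteq> G}"
    proof
      assume "G = \<sigma>" then show ?thesis using s by auto
    next
      assume "G \<in> (\<lambda>w. insert w (\<sigma> - {v})) ` ?S"
      then obtain w where w: "w \<in> V - \<sigma>" "insert w (\<sigma> - {v}) \<in> K" "G = insert w (\<sigma> - {v})" by auto
      then have "card G = r + 1" using c fs by simp
      then show ?thesis using w unfolding faces_def by auto
    qed
  qed
  have inj: "inj_on (\<lambda>w. insert w (\<sigma> - {v})) ?S"
    by (rule inj_onI) (auto simp: insert_ident)
  have nin: "\<sigma> \<notin> (\<lambda>w. insert w (\<sigma> - {v})) ` ?S" using v by auto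
  have "finite ?S" using finV by auto
  then have "card {G\<in>faces K r. \<sigma> - {v} \<subseteq> G} = 1 + card ?S"
    unfolding eq using nin card_image[OF inj] by simp
  then show ?thesis unfolding up_degree_def c by simp
qed

lemma Wt_eq:
  assumes s: "\<sigma> \<in> faces K r"
  shows "Wt \<sigma> = (r + 1) + (\<Sum>w\<in>V - \<sigma>. Nc \<sigma> w)"
proof -
  have fs: "finite \<sigma>" "card \<sigma> = r + 1" "\<sigma> \<in> K" using s finF unfolding faces_def by auto
  have inj: "inj_on (\<lambda>v. \<sigma> - {v}) \<sigma>" by (rule inj_onI) auto
  have "Wt \<sigma> = (\<Sum>v\<in>\<sigma>. up_degree K (\<sigma> - {v}))"
    unfolding Wt_def subfaces_eq[OF s] sum.reindex[OF inj] by simp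
  also have "\<dots> = (\<Sum>v\<in>\<sigma>. 1 + card {w\<in>V - \<sigma>. insert w (\<sigma> - {v}) \<in> K})"
    using up_degree_sub[OF s] by simp
  also have "\<dots> = (\<Sum>v\<in>\<sigma>. 1 + (\<Sum>w\<in>V - \<sigma>. if insert w (\<sigma> - {v}) \<in> K then 1 else 0))"
    using finV by (intro sum.cong refl) (simp only: card_filter_sum[of "V - \<sigma>"] finite_Diff)
  also have "\<dots> = (r + 1) + (\<Sum>v\<in>\<sigma>. \<Sum>w\<in>V - \<sigma>. if insert w (\<sigma> - {v}) \<in> K then 1 else 0)"
    using fs by (simp only: sum.distrib) simp
  also have "(\<Sum>v\<in>\<sigma>. \<Sum>w\<in>V - \<sigma>. if insert w (\<sigma> - {v}) \<in> K then 1 else 0)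
      = (\<Sum>w\<in>V - \<sigma>. \<Sum>v\<in>\<sigma>. if insert w (\<sigma> - {v}) \<in> K then (1::nat) else 0)"
    by (rule sum.swap)
  also have "\<dots> = (\<Sum>w\<in>V - \<sigma>. Nc \<sigma> w)"
    unfolding Nc_def using fs by (simp add: card_filter_sum)
  finally show ?thesis .
qed


end

lemma sum_eq_le_imp_eq:
  fixes f g :: "'b \<Rightarrow> 'c::ordered_cancel_comm_monoid_add"
  assumes "finite A" "\<And>a. a \<in> A \<Longrightarrow> f a \<le> g a" "sum f A = sum g A" "a \<in> A"
  shows "f a = g a"
proof (rule ccontr)
  assume "f a \<noteq> g a"
  then have "f a < g a" using assms(2)[OF assms(4)] by simp
  then have "sum f A < sum g A" using assms by (intro sum_strict_mono_ex1) auto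
  then show False using assms(3) by simp
qed

locale scx0 = scx +
  assumes betti0: "betti K r = 0"
begin

lemma faces_ne: "faces K r \<noteq> {}"
proof -
  have "K \<noteq> {}" using pure unfolding pure_dim_def by auto
  then obtain F where "F \<in> K" by auto
  then show ?thesis using in_face_r by auto
qed

lemma card_V: assumes "\<sigma> \<in> faces K r" shows "card V \<ge> r + 1"
proof -
  have "\<sigma> \<subseteq> V" "card \<sigma> = r + 1" using assms KV unfolding faces_def by auto
  then show ?thesis using card_mono[OF finV] by metis
qed

lemma Nc_le:
  assumes s: "\<sigma> \<in> faces K r" and w: "w \<in> V - \<sigma>"
  shows "Nc \<sigma> w \<le> r"
proof (rule ccontr)
  assume "\<not> Nc \<sigma> w \<le> r"
  have fs: "finite \<sigma>" "card \<sigma> = r + 1" "\<sigma> \<in> K" using s finF unfolding faces_def by auto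
  have le: "Nc \<sigma> w \<le> r + 1" unfolding Nc_def using fs by (metis (no_types, lifting) card_mono mem_Collect_eq subsetI)
  then have "card {v\<in>\<sigma>. insert w (\<sigma> - {v}) \<in> K} = card \<sigma>" using \<open>\<not> Nc \<sigma> w \<le> r\<close> fs unfolding Nc_def by simp
  then have eq: "{v\<in>\<sigma>. insert w (\<sigma> - {v}) \<in> K} = \<sigma>" using card_subset_eq[OF fs(1)] by (metis (no_types, lifting) mem_Collect_eq subsetI)
  show False
  proof (rule simplex_false[OF betti0, of "insert w \<sigma>"])
    show "finite (insert w \<sigma>)" using fs by simp
    show "card (insert w \<sigma>) = r + 2" using fs w by simp
    fix t assume t: "t \<in> insert w \<sigma>"
    show "insert w \<sigma> - {t} \<in> K"
    proof (cases "t = w")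
      case True then show ?thesis using w fs by auto
    next
      case False
      then have "t \<in> \<sigma>" using t by auto
      then have "insert w (\<sigma> - {t}) \<in> K" using eq by blast
      moreover have "insert w \<sigma> - {t} = insert w (\<sigma> - {t})" using False by auto
      ultimately show ?thesis by simp
    qed
  qed
qed

definition Rn :: nat where "Rn = r * (card V - r) + 1"

lemma Wt_le:
  assumes s: "\<sigma> \<in> faces K r"
  shows "Wt \<sigma> \<le> Rn"
proof -
  have fs: "finite \<sigma>" "card \<sigma> = r + 1" "\<sigma> \<subseteq> V" using s finF KV unfolding faces_def by auto
  have cD: "card (V - \<sigma>) = card V - (r + 1)" using fs finV by (simp add: card_Diff_subset)
  have "(\<Sum>w\<in>V - \<sigma>. Nc \<sigma> w) \<le> (\<Sum>w\<in>V - \<sigma>. r)" using Nc_le[OF s] by (intro sum_mono) auto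
  also have "\<dots> = (card V - (r + 1)) * r" using cD by simp
  finally have "Wt \<sigma> \<le> (r + 1) + (card V - (r + 1)) * r" using Wt_eq[OF s] by simp
  moreover have "(r + 1) + (card V - (r + 1)) * r = Rn"
  proof -
    obtain m where m: "card V = r + 1 + m" using card_V[OF s] le_iff_add by blast
    show ?thesis unfolding Rn_def m by (simp add: algebra_simps)
  qed
  ultimately show ?thesis by simp
qed

lemma eig_core:
  assumes x: "x \<in> chains K (r - 1)" "x \<noteq> (\<lambda>_. 0)"
    and eig: "signless_up_laplacian K (r - 1) x = (\<lambda>F. \<mu> * x F)"
    and ge: "\<mu> \<ge> real Rn"
  shows "\<mu> = real Rn \<and> (\<exists>S. S \<subseteq> faces K r \<and> S \<noteq> {} \<and> (\<forall>\<sigma>\<in>S. Wt \<sigma> = Rn) \<and>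
     (\<forall>\<sigma>\<in>S. \<forall>F\<in>faces K (r - 1). F \<subseteq> \<sigma> \<longrightarrow> (\<forall>\<tau>\<in>faces K r. F \<subseteq> \<tau> \<longrightarrow> \<tau> \<in> S)))"
proof -
  have rr: "r - 1 + 1 = r" using r1 by simp
  define y where "y = (\<lambda>\<sigma>. \<Sum>F\<in>{F\<in>faces K (r - 1). F \<subseteq> \<sigma>}. x F)"
  define D where "D = (\<lambda>F. {\<tau>\<in>faces K r. F \<subseteq> \<tau>})"
  define Sub where "Sub = (\<lambda>\<sigma>. {F\<in>faces K (r - 1). F \<subseteq> \<sigma>})"
  have finD: "finite (D F)" for F unfolding D_def using fin_faces by simp
  have finSub: "finite (Sub \<sigma>)" for \<sigma> unfolding Sub_def using fin_faces by simp
  have eq1: "\<mu> * x F = (\<Sum>\<tau>\<in>D F. y \<tau>)" if F: "F \<in> faces K (r - 1)" for F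
  proof -
    have "\<mu> * x F = signless_up_laplacian K (r - 1) x F" using eig by (simp add: fun_eq_iff)
    also have "\<dots> = (\<Sum>\<tau>\<in>D F. y \<tau>)" unfolding Q_BB[OF F] D_def y_def rr ..
    finally show ?thesis .
  qed
  have eq2: "\<mu> * y \<sigma> = (\<Sum>F\<in>Sub \<sigma>. \<Sum>\<tau>\<in>D F. y \<tau>)" for \<sigma>
  proof -
    have "\<mu> * y \<sigma> = (\<Sum>F\<in>Sub \<sigma>. \<mu> * x F)" unfolding y_def Sub_def by (simp add: sum_distrib_left)
    also have "\<dots> = (\<Sum>F\<in>Sub \<sigma>. \<Sum>\<tau>\<in>D F. y \<tau>)" using eq1 unfolding Sub_def by (intro sum.cong) auto
    finally show ?thesis .
  qed
  have Rpos: "real Rn > 0" unfolding Rn_def by (simp add: add_pos_nonneg)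
  have mupos: "\<mu> > 0" using ge Rpos by simp
  have ynz: "\<exists>\<sigma>\<in>faces K r. y \<sigma> \<noteq> 0"
  proof (rule ccontr)
    assume "\<not> ?thesis"
    then have y0: "\<forall>\<sigma>\<in>faces K r. y \<sigma> = 0" by auto
    have "x F = 0" for F
    proof (cases "F \<in> faces K (r - 1)")
      case True
      then have "\<mu> * x F = 0" using eq1 y0 unfolding D_def by simp
      then show ?thesis using mupos by simp
    next
      case False then show ?thesis using x(1) unfolding chains_def by auto
    qed
    then show False using x(2) by auto
  qed
  define Y where "Y = (\<lambda>\<sigma>. \<bar>y \<sigma>\<bar>) ` faces K r"
  have finY: "finite Y" "Y \<noteq> {}" unfolding Y_def using fin_faces faces_ne by auto
  define M where "M = Max Y"
  have yM: "\<bar>y \<sigma>\<bar> \<le> M" if "\<sigma> \<in> faces K r" for \<sigma>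
    unfolding M_def by (rule Max_ge[OF finY(1)]) (use that in \<open>auto simp: Y_def\<close>)
  have Mpos: "M > 0"
  proof -
    obtain \<sigma> where "\<sigma> \<in> faces K r" "y \<sigma> \<noteq> 0" using ynz by auto
    then show ?thesis using yM[of \<sigma>] by linarith
  qed
  obtain \<sigma>0 where s0: "\<sigma>0 \<in> faces K r" "\<bar>y \<sigma>0\<bar> = M"
    using Max_in[OF finY] unfolding M_def Y_def by auto
  define S where "S = {\<sigma>\<in>faces K r. \<bar>y \<sigma>\<bar> = M}"
  have key: "\<mu> = real Rn \<and> Wt \<sigma> = Rn \<and> (\<forall>F\<in>Sub \<sigma>. \<forall>\<tau>\<in>D F. \<bar>y \<tau>\<bar> = M)" if s: "\<sigma> \<in> S" for \<sigma>
  proof -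
    have sf: "\<sigma> \<in> faces K r" "\<bar>y \<sigma>\<bar> = M" using s unfolding S_def by auto
    have DM: "(\<Sum>\<tau>\<in>D F. M) = real (up_degree K F) * M" if "F \<in> Sub \<sigma>" for F
    proof -
      have "card F = r" using that r1 unfolding Sub_def faces_def by auto
      then show ?thesis unfolding D_def up_degree_def by simp
    qed
    have WM: "(\<Sum>F\<in>Sub \<sigma>. \<Sum>\<tau>\<in>D F. M) = real (Wt \<sigma>) * M"
    proof -
      have "(\<Sum>F\<in>Sub \<sigma>. \<Sum>\<tau>\<in>D F. M) = (\<Sum>F\<in>Sub \<sigma>. real (up_degree K F) * M)"
        using DM by (intro sum.cong) auto
      also have "\<dots> = real (Wt \<sigma>) * M" unfolding Wt_def Sub_def by (simp add: sum_distrib_right)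
      finally show ?thesis .
    qed
    have "\<mu> * M = \<bar>\<mu> * y \<sigma>\<bar>" using sf mupos by (simp add: abs_mult)
    also have "\<dots> = \<bar>\<Sum>F\<in>Sub \<sigma>. \<Sum>\<tau>\<in>D F. y \<tau>\<bar>" using eq2 by simp
    also have "\<dots> \<le> (\<Sum>F\<in>Sub \<sigma>. \<Sum>\<tau>\<in>D F. \<bar>y \<tau>\<bar>)"
      by (rule order_trans[OF sum_abs]) (intro sum_mono sum_abs)
    finally have c1: "\<mu> * M \<le> (\<Sum>F\<in>Sub \<sigma>. \<Sum>\<tau>\<in>D F. \<bar>y \<tau>\<bar>)" .
    have le2: "(\<Sum>\<tau>\<in>D F. \<bar>y \<tau>\<bar>) \<le> (\<Sum>\<tau>\<in>D F. M)" for F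
      using yM unfolding D_def by (intro sum_mono) auto
    have c2: "(\<Sum>F\<in>Sub \<sigma>. \<Sum>\<tau>\<in>D F. \<bar>y \<tau>\<bar>) \<le> (\<Sum>F\<in>Sub \<sigma>. \<Sum>\<tau>\<in>D F. M)"
      by (rule sum_mono) (rule le2)
    have c3: "real (Wt \<sigma>) * M \<le> real Rn * M" using Wt_le[OF sf(1)] Mpos by simp
    have c4: "real Rn * M \<le> \<mu> * M" using ge Mpos by simp
    have e1: "(\<Sum>F\<in>Sub \<sigma>. \<Sum>\<tau>\<in>D F. \<bar>y \<tau>\<bar>) = (\<Sum>F\<in>Sub \<sigma>. \<Sum>\<tau>\<in>D F. M)"
      using c1 c2 c3 c4 WM by linarith
    have e2: "real (Wt \<sigma>) * M = real Rn * M" using c1 c2 c3 c4 WM by linarith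
    have e3: "\<mu> * M = real Rn * M" using c1 c2 c3 c4 WM by linarith
    have "\<forall>F\<in>Sub \<sigma>. \<forall>\<tau>\<in>D F. \<bar>y \<tau>\<bar> = M"
    proof (intro ballI)
      fix F \<tau> assume F: "F \<in> Sub \<sigma>" and t: "\<tau> \<in> D F"
      have i1: "(\<Sum>\<tau>\<in>D F. \<bar>y \<tau>\<bar>) = (\<Sum>\<tau>\<in>D F. M)"
        by (rule sum_eq_le_imp_eq[where f="\<lambda>F. \<Sum>\<tau>\<in>D F. \<bar>y \<tau>\<bar>" and g="\<lambda>F. \<Sum>\<tau>\<in>D F. M" and A="Sub \<sigma>"])
           (use finSub le2 e1 F in auto)
      show "\<bar>y \<tau>\<bar> = M"
        by (rule sum_eq_le_imp_eq[where f="\<lambda>\<tau>. \<bar>y \<tau>\<bar>" and g="\<lambda>_. M" and A="D F"])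
           (use finD yM i1 t in \<open>auto simp: D_def\<close>)
    qed
    then show ?thesis using e2 e3 Mpos by simp
  qed
  have "\<sigma>0 \<in> S" using s0 unfolding S_def by auto
  then have "\<mu> = real Rn" using key by blast
  moreover have "S \<subseteq> faces K r" "S \<noteq> {}" using \<open>\<sigma>0 \<in> S\<close> unfolding S_def by auto
  moreover have "\<forall>\<sigma>\<in>S. Wt \<sigma> = Rn" using key by blast
  moreover have "\<forall>\<sigma>\<in>S. \<forall>F\<in>faces K (r - 1). F \<subseteq> \<sigma> \<longrightarrow> (\<forall>\<tau>\<in>faces K r. F \<subseteq> \<tau> \<longrightarrow> \<tau> \<in> S)"
    using key unfolding S_def Sub_def D_def by blast
  ultimately show ?thesis by blast
qed

lemma eig_le:
  assumes "is_eigenvalue_Qup K (r - 1) \<mu>"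
  shows "\<mu> \<le> real Rn"
proof (rule ccontr)
  assume "\<not> \<mu> \<le> real Rn"
  then have "\<mu> \<ge> real Rn" by simp
  then show False using eig_core assms \<open>\<not> \<mu> \<le> real Rn\<close> unfolding is_eigenvalue_Qup_def by blast
qed


definition apex :: "'a set \<Rightarrow> 'a \<Rightarrow> bool" where
  "apex \<sigma> c \<longleftrightarrow> c \<in> \<sigma> \<and> (\<forall>w\<in>V - \<sigma>. \<forall>v\<in>\<sigma>. insert w (\<sigma> - {v}) \<in> K \<longleftrightarrow> v \<noteq> c)"

context
  fixes S :: "'a set set"
  assumes SF: "S \<subseteq> faces K r"
    and A1: "\<And>\<sigma> w. \<sigma> \<in> S \<Longrightarrow> w \<in> V - \<sigma> \<Longrightarrow> Nc \<sigma> w = r"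
    and A2: "\<And>\<sigma> v w. \<sigma> \<in> S \<Longrightarrow> v \<in> \<sigma> \<Longrightarrow> w \<in> V - \<sigma> \<Longrightarrow> insert w (\<sigma> - {v}) \<in> K \<Longrightarrow> insert w (\<sigma> - {v}) \<in> S"
begin

lemma S_facts: assumes "\<sigma> \<in> S" shows "finite \<sigma>" "card \<sigma> = r + 1" "\<sigma> \<in> K" "\<sigma> \<subseteq> V"
  using assms SF finF KV unfolding faces_def by auto

lemma miss_unique:
  assumes s: "\<sigma> \<in> S" and w: "w \<in> V - \<sigma>"
  shows "\<exists>v0. {v\<in>\<sigma>. insert w (\<sigma> - {v}) \<notin> K} = {v0}"
proof -
  note fs = S_facts[OF s]
  have "{v\<in>\<sigma>. insert w (\<sigma> - {v}) \<notin> K} = \<sigma> - {v\<in>\<sigma>. insert w (\<sigma> - {v}) \<in> K}" by auto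
  then have "card {v\<in>\<sigma>. insert w (\<sigma> - {v}) \<notin> K} = card \<sigma> - Nc \<sigma> w"
    unfolding Nc_def using fs by (simp add: card_Diff_subset)
  then have "card {v\<in>\<sigma>. insert w (\<sigma> - {v}) \<notin> K} = 1" using A1[OF s w] fs by simp
  then show ?thesis by (meson card_1_singletonE)
qed

lemma miss_present:
  assumes s: "\<sigma> \<in> S" and w: "w \<in> V - \<sigma>" and v1: "v1 \<in> \<sigma>" "insert w (\<sigma> - {v1}) \<notin> K"
    and x: "x \<in> \<sigma>" "x \<noteq> v1"
  shows "insert w (\<sigma> - {x}) \<in> K"
proof (rule ccontr)
  assume "insert w (\<sigma> - {x}) \<notin> K"
  obtain v0 where v0: "{v\<in>\<sigma>. insert w (\<sigma> - {v}) \<notin> K} = {v0}" using miss_unique[OF s w] by auto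
  have "v1 \<in> {v0}" "x \<in> {v0}" using v0 v1 x \<open>insert w (\<sigma> - {x}) \<notin> K\<close> by blast+
  then show False using x by simp
qed

lemma same_miss:
  assumes s: "\<sigma> \<in> S" and w: "w1 \<in> V - \<sigma>" "w2 \<in> V - \<sigma>" "w1 \<noteq> w2"
    and v: "v1 \<in> \<sigma>" "v2 \<in> \<sigma>" "insert w1 (\<sigma> - {v1}) \<notin> K" "insert w2 (\<sigma> - {v2}) \<notin> K"
  shows "v1 = v2"
proof (rule ccontr)
  assume ne: "v1 \<noteq> v2"
  note fs = S_facts[OF s]
  define \<sigma>' where "\<sigma>' = insert w1 (\<sigma> - {v2})"
  have s'K: "\<sigma>' \<in> K" unfolding \<sigma>'_def using miss_present[OF s w(1) v(1) v(3) v(2)] ne by auto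
  have s'S: "\<sigma>' \<in> S" unfolding \<sigma>'_def using A2[OF s v(2) w(1)] s'K unfolding \<sigma>'_def by auto
  have w2': "w2 \<in> V - \<sigma>'" using w unfolding \<sigma>'_def by auto
  have w1s': "w1 \<in> \<sigma>'" unfolding \<sigma>'_def by auto
  have m1: "insert w2 (\<sigma>' - {w1}) \<notin> K"
  proof -
    have "\<sigma>' - {w1} = \<sigma> - {v2}" unfolding \<sigma>'_def using w by auto
    then show ?thesis using v(4) by simp
  qed
  have pres: "insert w2 (\<sigma>' - {x}) \<in> K" if "x \<in> \<sigma>'" "x \<noteq> w1" for x
    using miss_present[OF s'S w2' w1s' m1 that] .
  define S1 where "S1 = insert w2 \<sigma>"
  define S2 where "S2 = insert w1 (insert w2 (\<sigma> - {v2}))"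
  define P where "P = insert w2 (\<sigma> - {v2})"
  have fin: "finite S1" "finite S2" unfolding S1_def S2_def using fs by auto
  have c1: "card S1 = r + 2" unfolding S1_def using fs w by simp
  have c2: "card S2 = r + 2" unfolding S2_def using fs w v by (simp add: card_insert_if)
  have cP: "card P = r + 1" unfolding P_def using fs w v by simp
  have IP: "S1 \<inter> S2 = P" unfolding S1_def S2_def P_def using w v by auto
  show False
  proof (rule two_simplex_false[OF betti0 fin c1 c2 IP cP])
    fix F assume F: "F \<subseteq> S1 \<or> F \<subseteq> S2" "card F = r + 1" "F \<noteq> P"
    show "F \<in> K"
    proof (cases "F \<subseteq> S1")
      case True
      then obtain t where t: "t \<in> S1" "F = S1 - {t}" using sub_card1[OF fin(1) True] c1 F(2) by auto
      show ?thesis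
      proof (cases "t = w2")
        case True then have "F = \<sigma>" using t w unfolding S1_def by auto
        then show ?thesis using fs by simp
      next
        case False
        then have ts: "t \<in> \<sigma>" using t unfolding S1_def by auto
        have Fe: "F = insert w2 (\<sigma> - {t})" using t False unfolding S1_def by auto
        then have "t \<noteq> v2" using F(3) unfolding P_def by auto
        then show ?thesis using Fe miss_present[OF s w(2) v(2) v(4) ts] by simp
      qed
    next
      case False
      then have FS2: "F \<subseteq> S2" using F by auto
      then obtain t where t: "t \<in> S2" "F = S2 - {t}" using sub_card1[OF fin(2) FS2] c2 F(2) by auto
      have "t \<noteq> w1"
      proof
        assume "t = w1"
        then have "F = P" using t w v unfolding S2_def P_def by auto
        then show False using F(3) by simp
      qed
      show ?thesis
      proof (cases "t = w2")
        case True
        then have "F = \<sigma>'" using t w v \<open>t \<noteq> w1\<close> unfolding S2_def \<sigma>'_def by auto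
        then show ?thesis using s'K by simp
      next
        case False
        then have ts: "t \<in> \<sigma>'" "t \<noteq> w1" using t \<open>t \<noteq> w1\<close> unfolding S2_def \<sigma>'_def by auto
        have "F = insert w2 (\<sigma>' - {t})" using t False \<open>t \<noteq> w1\<close> w unfolding S2_def \<sigma>'_def by auto
        then show ?thesis using pres[OF ts] by simp
      qed
    qed
  qed
qed

lemma apex_exists:
  assumes s: "\<sigma> \<in> S" shows "\<exists>c. apex \<sigma> c"
proof (cases "V - \<sigma> = {}")
  case True
  note fs = S_facts[OF s]
  then obtain c where "c \<in> \<sigma>" by fastforce
  then show ?thesis using True unfolding apex_def by auto
next
  case False
  then obtain w0 where w0: "w0 \<in> V - \<sigma>" by auto
  obtain c where c: "{v\<in>\<sigma>. insert w0 (\<sigma> - {v}) \<notin> K} = {c}" using miss_unique[OF s w0] by auto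
  have cs: "c \<in> \<sigma>" "insert w0 (\<sigma> - {c}) \<notin> K" using c by auto
  have "\<forall>w\<in>V - \<sigma>. \<forall>v\<in>\<sigma>. insert w (\<sigma> - {v}) \<in> K \<longleftrightarrow> v \<noteq> c"
  proof (intro ballI)
    fix w v assume w: "w \<in> V - \<sigma>" and v: "v \<in> \<sigma>"
    obtain c' where c': "{v\<in>\<sigma>. insert w (\<sigma> - {v}) \<notin> K} = {c'}" using miss_unique[OF s w] by auto
    have cs': "c' \<in> \<sigma>" "insert w (\<sigma> - {c'}) \<notin> K" using c' by auto
    have "c' = c"
    proof (cases "w = w0")
      case True then show ?thesis using c c' by auto
    next
      case False
      show ?thesis using same_miss[OF s w w0 False cs'(1) cs(1) cs'(2) cs(2)] .
    qed
    then show "insert w (\<sigma> - {v}) \<in> K \<longleftrightarrow> v \<noteq> c" using c' v by auto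
  qed
  then show ?thesis using cs unfolding apex_def by auto
qed

lemma apex_step:
  assumes s: "\<sigma> \<in> S" and a: "apex \<sigma> c" and u: "u \<in> \<sigma>" "u \<noteq> c" and w: "w \<in> V - \<sigma>"
  shows "insert w (\<sigma> - {u}) \<in> S \<and> apex (insert w (\<sigma> - {u})) c"
proof -
  note fs = S_facts[OF s]
  define \<sigma>' where "\<sigma>' = insert w (\<sigma> - {u})"
  have "\<sigma>' \<in> K" using a u w unfolding apex_def \<sigma>'_def by auto
  then have s'S: "\<sigma>' \<in> S" using A2[OF s u(1) w] unfolding \<sigma>'_def by auto
  obtain c' where c': "apex \<sigma>' c'" using apex_exists[OF s'S] by auto
  have uV: "u \<in> V - \<sigma>'" using u fs w unfolding \<sigma>'_def by auto
  have cs': "c \<in> \<sigma>'" using a u unfolding apex_def \<sigma>'_def by auto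
  have "insert u (\<sigma>' - {c}) = insert w (\<sigma> - {c})" unfolding \<sigma>'_def using u w a unfolding apex_def by auto
  moreover have "insert w (\<sigma> - {c}) \<notin> K" using a w unfolding apex_def by auto
  ultimately have "insert u (\<sigma>' - {c}) \<notin> K" by simp
  then have "c = c'" using c' uV cs' unfolding apex_def by auto
  then show ?thesis using s'S c' unfolding \<sigma>'_def by auto
qed

lemma apex_all:
  assumes "card (T - \<sigma>) = k" "\<sigma> \<in> S" "apex \<sigma> c" "T \<subseteq> V" "card T = r + 1" "c \<in> T"
  shows "T \<in> S"
  using assms
proof (induction k arbitrary: \<sigma>)
  case 0
  note fs = S_facts[OF 0(2)]
  have fT: "finite T" using 0(4) finV finite_subset by blast
  then have "T \<subseteq> \<sigma>" using 0(1) by auto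
  then have "T = \<sigma>" using card_subset_eq[OF fs(1)] fs 0(5) by auto
  then show ?case using 0 by simp
next
  case (Suc k)
  note fs = S_facts[OF Suc(3)]
  have fT: "finite T" using Suc(5) finV finite_subset by blast
  obtain w where w: "w \<in> T - \<sigma>" using Suc(2) by (metis card.empty ex_in_conv nat.simps(3))
  have "\<not> \<sigma> \<subseteq> T"
  proof
    assume "\<sigma> \<subseteq> T"
    then have "\<sigma> = T" using card_subset_eq[OF fT] fs Suc(6) by auto
    then show False using w by auto
  qed
  then obtain u where u: "u \<in> \<sigma>" "u \<notin> T" by auto
  have uc: "u \<noteq> c" using u Suc(7) by auto
  have wV: "w \<in> V - \<sigma>" using w Suc(5) by auto
  from apex_step[OF Suc(3) Suc(4) u(1) uc wV]
  have st: "insert w (\<sigma> - {u}) \<in> S" "apex (insert w (\<sigma> - {u})) c" by auto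
  have "T - insert w (\<sigma> - {u}) = (T - \<sigma>) - {w}" using u by auto
  then have "card (T - insert w (\<sigma> - {u})) = k" using Suc(2) w fT by simp
  then show ?case using Suc.IH[OF _ st] Suc by blast
qed

lemma comb_main:
  assumes ne: "S \<noteq> {}"
  shows "\<exists>c\<in>V. faces K r = {T. T \<subseteq> V \<and> card T = r + 1 \<and> c \<in> T}"
proof -
  obtain \<sigma>0 where s0: "\<sigma>0 \<in> S" using ne by auto
  obtain c where c: "apex \<sigma>0 c" using apex_exists[OF s0] by auto
  have cV: "c \<in> V" using c S_facts[OF s0] unfolding apex_def by auto
  have allT: "T \<in> K" if "T \<subseteq> V" "card T = r + 1" "c \<in> T" for T
    using apex_all[OF refl s0 c that] S_facts by blast
  have "faces K r = {T. T \<subseteq> V \<and> card T = r + 1 \<and> c \<in> T}"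
  proof (rule Set.set_eqI, rule HOL.iffI)
    fix \<tau> assume t: "\<tau> \<in> faces K r"
    then have ft: "\<tau> \<in> K" "card \<tau> = r + 1" "\<tau> \<subseteq> V" "finite \<tau>" using KV finF unfolding faces_def by auto
    have "c \<in> \<tau>"
    proof (rule ccontr)
      assume nc: "c \<notin> \<tau>"
      show False
      proof (rule simplex_false[OF betti0, of "insert c \<tau>"])
        show "finite (insert c \<tau>)" using ft by simp
        show "card (insert c \<tau>) = r + 2" using ft nc by simp
        fix t assume t: "t \<in> insert c \<tau>"
        show "insert c \<tau> - {t} \<in> K"
        proof (cases "t = c")
          case True then show ?thesis using nc ft by auto
        next
          case False
          then have tt: "t \<in> \<tau>" using t by auto
          have "insert c \<tau> - {t} = insert c (\<tau> - {t})" using False by auto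
          moreover have "insert c (\<tau> - {t}) \<in> K"
            using allT[of "insert c (\<tau> - {t})"] ft tt nc cV by (auto simp: card_insert_if)
          ultimately show ?thesis by simp
        qed
      qed
    qed
    then show "\<tau> \<in> {T. T \<subseteq> V \<and> card T = r + 1 \<and> c \<in> T}" using ft by auto
  next
    fix T assume "T \<in> {T. T \<subseteq> V \<and> card T = r + 1 \<and> c \<in> T}"
    then show "T \<in> faces K r" using allT unfolding faces_def by auto
  qed
  then show ?thesis using cV by auto
qed

end


lemma Rn_eq: assumes "card V \<ge> r + 1" shows "(r + 1) + (card V - (r + 1)) * r = Rn"
proof -
  obtain m where m: "card V = r + 1 + m" using assms le_iff_add by blast
  show ?thesis unfolding Rn_def m by (simp add: algebra_simps)
qed

lemma eig_eq:
  assumes "is_eigenvalue_Qup K (r - 1) (real Rn)"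
  shows "\<exists>c\<in>V. faces K r = {T. T \<subseteq> V \<and> card T = r + 1 \<and> c \<in> T}"
proof -
  obtain x where x: "x \<in> chains K (r - 1)" "x \<noteq> (\<lambda>_. 0)"
    "signless_up_laplacian K (r - 1) x = (\<lambda>F. real Rn * x F)"
    using assms unfolding is_eigenvalue_Qup_def by auto
  obtain S where S0: "S \<subseteq> faces K r \<and> S \<noteq> {} \<and> (\<forall>\<sigma>\<in>S. Wt \<sigma> = Rn) \<and>
    (\<forall>\<sigma>\<in>S. \<forall>F\<in>faces K (r - 1). F \<subseteq> \<sigma> \<longrightarrow> (\<forall>\<tau>\<in>faces K r. F \<subseteq> \<tau> \<longrightarrow> \<tau> \<in> S))"
    using conjunct2[OF eig_core[OF x order_refl]] by (rule exE)
  note S = S0[THEN conjunct1] S0[THEN conjunct2, THEN conjunct1]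
    S0[THEN conjunct2, THEN conjunct2, THEN conjunct1] S0[THEN conjunct2, THEN conjunct2, THEN conjunct2]
  have A1: "Nc \<sigma> w = r" if s: "\<sigma> \<in> S" and w: "w \<in> V - \<sigma>" for \<sigma> w
  proof -
    have sf: "\<sigma> \<in> faces K r" using s S(1) by auto
    have fs: "finite \<sigma>" "card \<sigma> = r + 1" "\<sigma> \<subseteq> V" using sf finF KV unfolding faces_def by auto
    have cD: "card (V - \<sigma>) = card V - (r + 1)" using fs finV by (simp add: card_Diff_subset)
    have "Wt \<sigma> = Rn" using S(3) s by blast
    then have "(r + 1) + (\<Sum>w\<in>V - \<sigma>. Nc \<sigma> w) = Rn" using Wt_eq[OF sf] by simp
    then have "(r + 1) + (\<Sum>w\<in>V - \<sigma>. Nc \<sigma> w) = (r + 1) + (card V - (r + 1)) * r"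
      using Rn_eq[OF card_V[OF sf]] by simp
    then have "(\<Sum>w\<in>V - \<sigma>. Nc \<sigma> w) = (\<Sum>w\<in>V - \<sigma>. r)" using cD by simp
    then show ?thesis
      by (rule sum_eq_le_imp_eq[where f="Nc \<sigma>" and g="\<lambda>_. r" and A="V - \<sigma>", rotated 2])
         (use finV Nc_le[OF sf] w in auto)
  qed
  have A2: "insert w (\<sigma> - {v}) \<in> S"
    if s: "\<sigma> \<in> S" and v: "v \<in> \<sigma>" and w: "w \<in> V - \<sigma>" and K: "insert w (\<sigma> - {v}) \<in> K" for \<sigma> v w
  proof -
    have sf: "\<sigma> \<in> faces K r" using s S(1) by auto
    have fs: "finite \<sigma>" "card \<sigma> = r + 1" using sf finF unfolding faces_def by auto
    have F: "\<sigma> - {v} \<in> faces K (r - 1)" using subfaces_eq[OF sf] v by auto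
    have "insert w (\<sigma> - {v}) \<in> faces K r" using K fs v w unfolding faces_def by auto
    moreover have "\<sigma> - {v} \<subseteq> insert w (\<sigma> - {v})" by auto
    ultimately show ?thesis using bspec[OF bspec[OF S(4) s] F] by blast
  qed
  show ?thesis by (rule comb_main[OF S(1) A1 A2 S(2)])
qed

lemma tented_eig:
  assumes c: "c \<in> V" and fr: "faces K r = {T. T \<subseteq> V \<and> card T = r + 1 \<and> c \<in> T}"
  shows "is_eigenvalue_Qup K (r - 1) (real Rn)"
proof -
  have rr: "r - 1 + 1 = r" using r1 by simp
  have WR: "Wt \<sigma> = Rn" if sf: "\<sigma> \<in> faces K r" for \<sigma>
  proof -
    have fs: "finite \<sigma>" "card \<sigma> = r + 1" "\<sigma> \<subseteq> V" "c \<in> \<sigma>" using sf finF KV fr unfolding faces_def by auto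
    have Nr: "Nc \<sigma> w = r" if w: "w \<in> V - \<sigma>" for w
    proof -
      have "{v\<in>\<sigma>. insert w (\<sigma> - {v}) \<in> K} = \<sigma> - {c}"
      proof (rule Set.set_eqI, rule HOL.iffI)
        fix v assume v: "v \<in> {v\<in>\<sigma>. insert w (\<sigma> - {v}) \<in> K}"
        then have "card (insert w (\<sigma> - {v})) = r + 1" using fs w by simp
        then have "insert w (\<sigma> - {v}) \<in> faces K r" using v unfolding faces_def by auto
        then have "c \<in> insert w (\<sigma> - {v})" using fr by auto
        then show "v \<in> \<sigma> - {c}" using v w fs by auto
      next
        fix v assume v: "v \<in> \<sigma> - {c}"
        then have "card (insert w (\<sigma> - {v})) = r + 1" using fs w by simp
        moreover have "insert w (\<sigma> - {v}) \<subseteq> V" using fs w by auto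
        moreover have "c \<in> insert w (\<sigma> - {v})" using v fs by auto
        ultimately have "insert w (\<sigma> - {v}) \<in> faces K r" using fr by auto
        then show "v \<in> {v\<in>\<sigma>. insert w (\<sigma> - {v}) \<in> K}" using v unfolding faces_def by auto
      qed
      then show ?thesis unfolding Nc_def using fs by simp
    qed
    have cD: "card (V - \<sigma>) = card V - (r + 1)" using fs finV by (simp add: card_Diff_subset)
    have "Wt \<sigma> = (r + 1) + (\<Sum>w\<in>V - \<sigma>. r)" using Wt_eq[OF sf] Nr by simp
    also have "\<dots> = Rn" using cD Rn_eq[OF card_V[OF sf]] by simp
    finally show ?thesis .
  qed
  define x where "x = (\<lambda>F. if F \<in> faces K (r - 1) then real (up_degree K F) else 0)"
  have xc: "x \<in> chains K (r - 1)" unfolding x_def chains_def by auto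
  have xnz: "x \<noteq> (\<lambda>_. 0)"
  proof -
    obtain \<sigma> where sf: "\<sigma> \<in> faces K r" using faces_ne by auto
    then have "\<sigma> \<noteq> {}" unfolding faces_def by auto
    then obtain v where v: "v \<in> \<sigma>" by auto
    have F: "\<sigma> - {v} \<in> faces K (r - 1)" using subfaces_eq[OF sf] v by auto
    have "x (\<sigma> - {v}) \<noteq> 0" unfolding x_def using F up_degree_sub[OF sf v] by simp
    then show ?thesis by auto
  qed
  have "signless_up_laplacian K (r - 1) x = (\<lambda>F. real Rn * x F)"
  proof
    fix F
    show "signless_up_laplacian K (r - 1) x F = real Rn * x F"
    proof (cases "F \<in> faces K (r - 1)")
      case False then show ?thesis unfolding signless_up_laplacian_def x_def by simp
    next
      case True
      have cF: "card F = r" using True r1 unfolding faces_def by auto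
      have "signless_up_laplacian K (r - 1) x F
          = (\<Sum>\<sigma>\<in>{\<sigma>\<in>faces K r. F \<subseteq> \<sigma>}. \<Sum>F'\<in>{F'\<in>faces K (r - 1). F' \<subseteq> \<sigma>}. x F')"
        unfolding Q_BB[OF True] rr ..
      also have "\<dots> = (\<Sum>\<sigma>\<in>{\<sigma>\<in>faces K r. F \<subseteq> \<sigma>}. real (Wt \<sigma>))"
        unfolding Wt_def x_def by (intro sum.cong refl) simp
      also have "\<dots> = (\<Sum>\<sigma>\<in>{\<sigma>\<in>faces K r. F \<subseteq> \<sigma>}. real Rn)"
        using WR by (intro sum.cong refl) auto
      also have "\<dots> = real Rn * x F"
        unfolding x_def up_degree_def cF using True by simp
      finally show ?thesis .
    qed
  qed
  then show ?thesis unfolding is_eigenvalue_Qup_def using xc xnz by blast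
qed

end



context scx0 begin

lemma iso_to_faces:
  assumes iso: "complex_iso V K {1..card V} (tented (card V) r)"
  shows "\<exists>c\<in>V. faces K r = {T. T \<subseteq> V \<and> card T = r + 1 \<and> c \<in> T}"
proof -
  define N where "N = card V"
  obtain \<phi> where \<phi>: "bij_betw \<phi> V {1..N}" and img: "(\<lambda>F. \<phi> ` F) ` K = tented N r"
    using iso unfolding complex_iso_def N_def by auto
  have inj: "inj_on \<phi> V" and sur: "\<phi> ` V = {1..N}" using \<phi> by (auto simp: bij_betw_def)
  obtain \<sigma> where "\<sigma> \<in> faces K r" using faces_ne by auto
  then have NR: "N \<ge> r + 1" using card_V unfolding N_def by auto
  then have "N \<in> \<phi> ` V" using sur by auto
  then obtain c where c: "c \<in> V" "\<phi> c = N" by auto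
  have inK: "T \<in> K \<longleftrightarrow> \<phi> ` T \<in> tented N r" if T: "T \<subseteq> V" for T
  proof
    assume "T \<in> K" then show "\<phi> ` T \<in> tented N r" using img by auto
  next
    assume "\<phi> ` T \<in> tented N r"
    then obtain G where G: "G \<in> K" "\<phi> ` T = \<phi> ` G" using img by (metis imageE)
    then have "T = G" using inj_on_image_eq_iff[OF inj T KV[OF G(1)]] by simp
    then show "T \<in> K" using G by simp
  qed
  have "faces K r = {T. T \<subseteq> V \<and> card T = r + 1 \<and> c \<in> T}"
  proof (rule Set.set_eqI, rule HOL.iffI)
    fix T assume T: "T \<in> faces K r"
    then have TK: "T \<in> K" "card T = r + 1" "T \<subseteq> V" using KV unfolding faces_def by auto
    then have "\<phi> ` T \<in> tented N r" using inK by auto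
    then obtain F where F: "F \<subseteq> {1..N-1}" "card F = r" "\<phi> ` T \<subseteq> insert N F" unfolding tented_def by auto
    have fF: "finite F" using F(1) finite_subset by blast
    have NF: "N \<notin> F" using F(1) NR by auto
    have cT: "card (\<phi> ` T) = r + 1" using card_image[OF inj_on_subset[OF inj TK(3)]] TK by simp
    have "card (insert N F) = r + 1" using fF NF F by simp
    then have "\<phi> ` T = insert N F" using card_subset_eq[OF _ F(3)] fF cT by simp
    then have "N \<in> \<phi> ` T" by simp
    then obtain x where x: "x \<in> T" "\<phi> x = N" by auto
    then have "x = c" using inj c TK(3) by (metis inj_onD subsetD)
    then show "T \<in> {T. T \<subseteq> V \<and> card T = r + 1 \<and> c \<in> T}" using x TK by auto
  next
    fix T assume "T \<in> {T. T \<subseteq> V \<and> card T = r + 1 \<and> c \<in> T}"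
    then have T: "T \<subseteq> V" "card T = r + 1" "c \<in> T" by auto
    have fT: "finite T" using T finV finite_subset by blast
    define F where "F = \<phi> ` (T - {c})"
    have F1: "F \<subseteq> {1..N-1}"
    proof
      fix y assume "y \<in> F"
      then obtain x where x: "x \<in> T" "x \<noteq> c" "y = \<phi> x" unfolding F_def by auto
      have "y \<in> \<phi> ` V" using x T by auto
      then have "y \<in> {1..N}" using sur by simp
      moreover have "y \<noteq> N" using x c inj T by (metis inj_onD subsetD)
      ultimately show "y \<in> {1..N-1}" by auto
    qed
    have "card F = card (T - {c})" unfolding F_def by (rule card_image[OF inj_on_subset[OF inj]]) (use T in auto)
    then have F2: "card F = r" using T fT by simp
    have "\<phi> ` T = insert N F" unfolding F_def using T c by auto
    then have "\<phi> ` T \<in> tented N r" unfolding tented_def using F1 F2 by auto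
    then have "T \<in> K" using inK T by auto
    then show "T \<in> faces K r" using T unfolding faces_def by auto
  qed
  then show ?thesis using c by auto
qed

lemma faces_to_iso:
  assumes c: "c \<in> V" and fr: "faces K r = {T. T \<subseteq> V \<and> card T = r + 1 \<and> c \<in> T}"
  shows "complex_iso V K {1..card V} (tented (card V) r)"
proof -
  define N where "N = card V"
  obtain \<sigma> where "\<sigma> \<in> faces K r" using faces_ne by auto
  then have NR: "N \<ge> r + 1" using card_V unfolding N_def by auto
  have cD: "card (V - {c}) = N - 1" unfolding N_def using c finV by simp
  have "\<exists>h. bij_betw h (V - {c}) {0..<card (V - {c})}" by (rule ex_bij_betw_finite_nat) (use finV in simp)
  then obtain g0 where "bij_betw g0 (V - {c}) {0..<card (V - {c})}" by blast
  then have g: "bij_betw g0 (V - {c}) {0..<N - 1}" using cD by simp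
  have ginj: "inj_on g0 (V - {c})" and gimg: "g0 ` (V - {c}) = {0..<N - 1}" using g by (auto simp: bij_betw_def)
  define \<phi> where "\<phi> = (\<lambda>x. if x = c then N else Suc (g0 x))"
  have \<phi>r: "\<phi> x \<in> {1..N-1}" if x: "x \<in> V - {c}" for x
  proof -
    have "g0 x \<in> g0 ` (V - {c})" using x by blast
    then have "g0 x < N - 1" using gimg by simp
    then show ?thesis using x unfolding \<phi>_def by simp
  qed
  have inj: "inj_on \<phi> V"
  proof (rule inj_onI)
    fix x y assume xy: "x \<in> V" "y \<in> V" "\<phi> x = \<phi> y"
    show "x = y"
    proof (cases "x = c"; cases "y = c")
      assume "x = c" "y \<noteq> c" then show ?thesis using xy \<phi>r[of y] NR unfolding \<phi>_def by auto
    next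
      assume "x \<noteq> c" "y = c" then show ?thesis using xy \<phi>r[of x] NR unfolding \<phi>_def by auto
    next
      assume a: "x \<noteq> c" "y \<noteq> c"
      then have "g0 x = g0 y" using xy(3) unfolding \<phi>_def by simp
      moreover have "x \<in> V - {c}" "y \<in> V - {c}" using a xy by auto
      ultimately show ?thesis using inj_onD[OF ginj] by blast
    qed simp
  qed
  have sur: "\<phi> ` V = {1..N}"
  proof
    show "\<phi> ` V \<subseteq> {1..N}"
    proof
      fix y assume "y \<in> \<phi> ` V"
      then obtain x where x2: "y = \<phi> x" and x1: "x \<in> V" by (rule imageE)
      note x = x1 x2
      show "y \<in> {1..N}"
      proof (cases "x = c")
        case True then show ?thesis using x NR unfolding \<phi>_def by simp
      next
        case False then show ?thesis using x \<phi>r[of x] by auto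
      qed
    qed
    show "{1..N} \<subseteq> \<phi> ` V"
    proof
      fix y assume y: "y \<in> {1..N}"
      show "y \<in> \<phi> ` V"
      proof (cases "y = N")
        case True
        have "\<phi> c = N" unfolding \<phi>_def by simp
        then show ?thesis using c True by (metis imageI)
      next
        case False
        then have "y - 1 \<in> g0 ` (V - {c})" using gimg y by auto
        then obtain x where x2: "y - 1 = g0 x" and x1: "x \<in> V - {c}" by (rule imageE)
        note x = x1 x2[symmetric]
        then have "\<phi> x = y" unfolding \<phi>_def using y by auto
        then show ?thesis using x by auto
      qed
    qed
  qed
  have \<phi>c: "\<phi> c = N" unfolding \<phi>_def by simp
  have "(\<lambda>F. \<phi> ` F) ` K = tented N r"
  proof
    show "(\<lambda>F. \<phi> ` F) ` K \<subseteq> tented N r"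
    proof
      fix G' assume "G' \<in> (\<lambda>F. \<phi> ` F) ` K"
      then obtain G where G: "G \<in> K" "G' = \<phi> ` G" by auto
      obtain T where T: "T \<in> faces K r" "G \<subseteq> T" using in_face_r[OF G(1)] by auto
      then have T': "T \<subseteq> V" "card T = r + 1" "c \<in> T" using fr by auto
      have fT: "finite T" using T' finV finite_subset by blast
      define F where "F = \<phi> ` (T - {c})"
      have F1: "F \<subseteq> {1..N-1}"
      proof
        fix y assume "y \<in> F"
        then obtain x where x: "y = \<phi> x" "x \<in> T - {c}" unfolding F_def by (rule imageE)
        then have "x \<in> V - {c}" using T' by auto
        then show "y \<in> {1..N-1}" using \<phi>r[of x] x by simp
      qed
      have "card F = card (T - {c})" unfolding F_def by (rule card_image[OF inj_on_subset[OF inj]]) (use T' in auto)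
      then have F2: "card F = r" using T' fT by simp
      have "G' \<subseteq> insert N F" unfolding F_def G(2) using T(2) \<phi>c by auto
      then show "G' \<in> tented N r" unfolding tented_def using F1 F2 by auto
    qed
    show "tented N r \<subseteq> (\<lambda>F. \<phi> ` F) ` K"
    proof
      fix G' assume "G' \<in> tented N r"
      then obtain F where F: "F \<subseteq> {1..N-1}" "card F = r" "G' \<subseteq> insert N F" unfolding tented_def by auto
      have fF: "finite F" using F(1) finite_subset by blast
      have NF: "N \<notin> F" using F(1) NR by auto
      define T where "T = {x\<in>V. \<phi> x \<in> insert N F}"
      have TV: "T \<subseteq> V" unfolding T_def by auto
      have s1: "{1..N-1} \<subseteq> {1..N}" by auto
      have s2: "N \<in> {1..N}" using NR by simp
      have "insert N F \<subseteq> {1..N}" using s2 subset_trans[OF F(1) s1] by (simp add: insert_subset)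
      then have iT: "\<phi> ` T = insert N F"
      proof -
        assume sub: "insert N F \<subseteq> {1..N}"
        show ?thesis
        proof
          show "\<phi> ` T \<subseteq> insert N F" unfolding T_def by auto
          show "insert N F \<subseteq> \<phi> ` T"
          proof
            fix y assume y: "y \<in> insert N F"
            then have "y \<in> \<phi> ` V" using sub sur by auto
            then obtain x where "x \<in> V" "\<phi> x = y" by auto
            then show "y \<in> \<phi> ` T" unfolding T_def using y by auto
          qed
        qed
      qed
      have "card T = card (\<phi> ` T)" using card_image[OF inj_on_subset[OF inj TV]] by simp
      then have cT: "card T = r + 1" using iT fF NF F(2) by simp
      have "c \<in> T" unfolding T_def using c \<phi>c by simp
      then have "T \<in> faces K r" using fr TV cT by auto
      then have TK: "T \<in> K" unfolding faces_def by auto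
      define G where "G = {x\<in>T. \<phi> x \<in> G'}"
      have "G \<in> K" using Kdown[OF TK] unfolding G_def by auto
      moreover have "\<phi> ` G = G'"
      proof
        show "\<phi> ` G \<subseteq> G'" unfolding G_def by auto
        show "G' \<subseteq> \<phi> ` G"
        proof
          fix y assume y: "y \<in> G'"
          then have "y \<in> \<phi> ` T" using F(3) iT by auto
          then obtain x where "x \<in> T" "\<phi> x = y" by auto
          then show "y \<in> \<phi> ` G" unfolding G_def using y by auto
        qed
      qed
      ultimately show "G' \<in> (\<lambda>F. \<phi> ` F) ` K" by blast
    qed
  qed
  moreover have "bij_betw \<phi> V {1..N}" unfolding bij_betw_def using inj sur by simp
  ultimately show ?thesis unfolding complex_iso_def N_def[symmetric] by blast
qed

end

theorem mainTheorem10: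
  fixes V :: "'a::linorder set" and K :: "'a set set" and r n :: nat
  assumes "simplicial_complex V K"
    and "card V = n"
    and "r \<ge> 1"
    and "n \<ge> r + 1"
    and "pure_dim K r"
    and "\<forall>i\<in>{1..r}. betti K i = 0"
  shows "q_up K (r - 1) \<le> real (r * n - r ^ 2 + 1)
    \<and> (q_up K (r - 1) = real (r * n - r ^ 2 + 1) \<longleftrightarrow> complex_iso V K {1..n} (tented n r))"
proof -
  have b: "betti K r = 0" using assms(6) assms(3) by auto
  interpret scx0 V K r by unfold_locales (use assms b in auto)
  have Rn_n: "r * n - r ^ 2 + 1 = Rn"
    unfolding Rn_def assms(2) by (simp add: diff_mult_distrib2 power2_eq_square)
  define E where "E = {\<mu>. is_eigenvalue_Qup K (r - 1) \<mu>}"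
  have fr1: "faces K (r - 1) \<noteq> {}"
  proof -
    obtain \<sigma> where sf: "\<sigma> \<in> faces K r" using faces_ne by auto
    then have "\<sigma> \<noteq> {}" unfolding faces_def by auto
    then obtain v where v: "v \<in> \<sigma>" by auto
    then have "\<sigma> - {v} \<in> faces K (r - 1)" using subfaces_eq[OF sf] by auto
    then show ?thesis by auto
  qed
  have finE: "finite E" and neE: "E \<noteq> {}"
    using eig_set_fin_ne[OF fin_faces fr1] unfolding E_def by auto
  have q: "q_up K (r - 1) = Max E" unfolding q_up_def E_def ..
  have le: "Max E \<le> real Rn"
    using Max_le_iff[OF finE neE] eig_le unfolding E_def by auto
  have eqv: "Max E = real Rn \<longleftrightarrow> complex_iso V K {1..n} (tented n r)"
  proof
    assume "Max E = real Rn"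
    then have "real Rn \<in> E" using Max_in[OF finE neE] by simp
    then have "is_eigenvalue_Qup K (r - 1) (real Rn)" unfolding E_def by simp
    then obtain c where "c \<in> V" "faces K r = {T. T \<subseteq> V \<and> card T = r + 1 \<and> c \<in> T}"
      using eig_eq by blast
    then show "complex_iso V K {1..n} (tented n r)" using faces_to_iso assms(2) by blast
  next
    assume "complex_iso V K {1..n} (tented n r)"
    then obtain c where "c \<in> V" "faces K r = {T. T \<subseteq> V \<and> card T = r + 1 \<and> c \<in> T}"
      using iso_to_faces assms(2) by blast
    then have "real Rn \<in> E" using tented_eig unfolding E_def by blast
    then have "real Rn \<le> Max E" using Max_ge[OF finE] by simp
    then show "Max E = real Rn" using le by simp
  qed
  show ?thesis unfolding q Rn_n using le eqv by simp
qed

end
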